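(* For each integer $m\ge 0$, the generating function $G_m(c,t)=\sum_{n=0}^\infty w_{\mathfrak{sl}(2)}(K_{m,n})\,t^n$ can be represented as a finite linear combination $$G_m=\sum_{i=0}^{m}\frac{a_{i}(c)}{1-\left(c-\frac{i(i+1)}{2}\right)t},$$ where the coefficients $a_i(c)$ are polynomials in $c$.
   Context: A chord diagram with $n$ chords is an oriented circle with $2n$ distinct points split into $n$ pairs (chords), up to orientation-preserving diffeomorphism. $K_{m,n}$ denotes the chord diagram whose circle is the concatenation, in cyclic order, of four arcs $I_1,J_1,I_2,J_2$, with $m$ chords joining the $k$-th point of $I_1$ to the $(m+1-k)$-th point of $I_2$ ($k=1,\dots,m$) and $n$ chords joining the $k$-th point of $J_1$ to the $(n+1-k)$-th point of $J_2$ ($k=1,\dots,n$), points on each arc counted along the orientation; thus chords within each family are pairwise non-intersecting and every chord of one family intersects every chord of the other (intersection graph is the complete bipartite graph $K_{m,n}$). The $\mathfrak{sl}(2)$-weight system is defined as follows: equip $\mathfrak{sl}(2)$ with the invariant scalar product $\langle x,y\rangle=2\operatorname{tr}(xy)$, choose a basis $e_1,e_2,e_3$ and dual basis $e_i^*$; for a chord diagram $C$, cut the circle at a point not an endpoint of any chord, assign to each chord $a$ an index $i_a$, put $e_{i_a}$ at one end and $e^*_{i_a}$ at the other, multiply the $2n$ elements in $U(\mathfrak{sl}(2))$ in the order along the oriented circle, and sum over all index assignments. The result $w_{\mathfrak{sl}(2)}(C)$ lies in the center $ZU(\mathfrak{sl}(2))=\mathbb{C}[c]$, where $c$ is the Casimir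 element, equal to the value on the diagram with one chord. (With this normalization, adding a chord intersecting no other chord multiplies the value by $c$, and adding a chord intersecting exactly one other chord multiplies it by $c-1$.) *)

theory Defs
  imports Complex_Main "HOL-Computational_Algebra.Polynomial" "HOL-Library.FuncSet"
begin

text \<open>Matrices are modelled as functions nat => nat => complex; a matrix of size d
  is zero outside the index range {..<d}.\<close>

definition mmul :: "nat \<Rightarrow> (nat \<Rightarrow> nat \<Rightarrow> complex) \<Rightarrow> (nat \<Rightarrow> nat \<Rightarrow> complex) \<Rightarrow> (nat \<Rightarrow> nat \<Rightarrow> complex)" where
  "mmul d A B = (\<lambda>i j. \<Sum>l<d. A i l * B l j)"

definition mid :: "nat \<Rightarrow> (nat \<Rightarrow> nat \<Rightarrow> complex)" where
  "mid d = (\<lambda>i j. if i = j \<and> i < d then 1 else 0)"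

text \<open>The irreducible (k+1)-dimensional representation V_k of sl(2), basis v_0..v_k
  (v_j = x^(k-j) y^j): e v_j = j v_(j-1), f v_j = (k-j) v_(j+1), h v_j = (k-2j) v_j.\<close>

definition Ee :: "nat \<Rightarrow> nat \<Rightarrow> nat \<Rightarrow> complex" where
  "Ee k = (\<lambda>i j. if j = i + 1 \<and> j \<le> k then of_nat j else 0)"

definition Ff :: "nat \<Rightarrow> nat \<Rightarrow> nat \<Rightarrow> complex" where
  "Ff k = (\<lambda>i j. if i = j + 1 \<and> i \<le> k then of_nat (k - j) else 0)"

definition Hh :: "nat \<Rightarrow> nat \<Rightarrow> nat \<Rightarrow> complex" where
  "Hh k = (\<lambda>i j. if i = j \<and> i \<le> k then of_int (int k - 2 * int i) else 0)"

text \<open>Basis e_0 = e, e_1 = h, e_2 = f of sl(2) and its dual basis w.r.t. <x,y> = 2 tr(xy):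
  e^* = f/2, h^* = h/4, f^* = e/2.\<close>

definition gen :: "nat \<Rightarrow> nat \<Rightarrow> (nat \<Rightarrow> nat \<Rightarrow> complex)" where
  "gen k a = (if a = 0 then Ee k else if a = 1 then Hh k else Ff k)"

definition dualgen :: "nat \<Rightarrow> nat \<Rightarrow> (nat \<Rightarrow> nat \<Rightarrow> complex)" where
  "dualgen k a = (if a = 0 then (\<lambda>i j. Ff k i j / 2)
                  else if a = 1 then (\<lambda>i j. Hh k i j / 4)
                  else (\<lambda>i j. Ee k i j / 2))"

text \<open>A chord diagram cut at a point is a word (list of chord labels) in which every
  label occurs exactly twice.\<close>

definition chord_word :: "nat list \<Rightarrow> bool" where
  "chord_word w = (\<forall>x\<in>set w. count_list w x = 2)"

text \<open>Image in End(V_k) of the element of U(sl(2)) assigned to the chord diagram: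
  sum over index assignments, e_i at the first end, e_i^* at the second end,
  product in the order along the word.\<close>

definition ws_rep :: "nat \<Rightarrow> nat list \<Rightarrow> (nat \<Rightarrow> nat \<Rightarrow> complex)" where
  "ws_rep k w = (\<lambda>i j. \<Sum>\<sigma>\<in>PiE (set w) (\<lambda>_. {0,1,2::nat}).
      foldr (\<lambda>p M. mmul (k+1)
                (if w ! p \<in> set (take p w) then dualgen k (\<sigma> (w ! p)) else gen k (\<sigma> (w ! p))) M)
            [0..<length w] (mid (k+1)) i j)"

text \<open>Casimir eigenvalue on V_k: value of the one-chord diagram.\<close>

definition cas :: "nat \<Rightarrow> complex" where
  "cas k = ws_rep k [0, 0] 0 0"

text \<open>Since the direct sum of all V_k is a faithful U(sl(2))-module, the central element
  w_sl2(C) in C[c] is the polynomial p acting as the scalar p(cas k) on every V_k.\<close>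

definition wsl2 :: "nat list \<Rightarrow> complex poly" where
  "wsl2 w = (THE p. \<forall>k. ws_rep k w = (\<lambda>i j. if i = j \<and> i \<le> k then poly p (cas k) else 0))"

text \<open>K_{m,n}: arcs I_1, J_1, I_2, J_2; chords of the first family labelled 0..m-1,
  of the second family m..m+n-1.\<close>

definition Kmn :: "nat \<Rightarrow> nat \<Rightarrow> nat list" where
  "Kmn m n = [0..<m] @ [m..<m+n] @ rev [0..<m] @ rev [m..<m+n]"

end

theory Submission
  imports Defs "HOL-Library.Function_Algebras"
begin

declare plus_fun_apply[simp del] zero_fun_apply[simp del] times_fun_apply[simp del] one_fun_apply[simp del]

lemmas fa = plus_fun_apply zero_fun_apply minus_apply uminus_apply

type_synonym mat = "nat \<Rightarrow> nat \<Rightarrow> complex"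

definition sm :: "complex \<Rightarrow> mat \<Rightarrow> mat" where
  "sm a Y = (\<lambda>i j. a * Y i j)"

definition supp :: "nat \<Rightarrow> mat \<Rightarrow> bool" where
  "supp k Y = (\<forall>i j. k < i \<or> k < j \<longrightarrow> Y i j = 0)"

lemma sum_if_eq_single:
  fixes f :: "nat \<Rightarrow> complex"
  shows "(\<Sum>l<d. (if l = a then f l else 0)) = (if a < d then f a else 0)"
  by (simp add: sum.delta')

lemma mmul_E_left: "mmul (Suc k) (Ee k) Y i j = (if i < k then of_nat (Suc i) * Y (Suc i) j else 0)"
proof -
  have "mmul (Suc k) (Ee k) Y i j = (\<Sum>l<Suc k. (if l = Suc i then (if Suc i \<le> k then of_nat l * Y l j else 0) else 0))"
    unfolding mmul_def Ee_def by (intro sum.cong) auto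
  also have "\<dots> = (if i < k then of_nat (Suc i) * Y (Suc i) j else 0)"
    by (subst sum_if_eq_single) auto
  finally show ?thesis .
qed

lemma mmul_E_right: "mmul (Suc k) Y (Ee k) i j = (if 0 < j \<and> j \<le> k then Y i (j - 1) * of_nat j else 0)"
proof -
  have "mmul (Suc k) Y (Ee k) i j = (\<Sum>l<Suc k. (if l = j - 1 then (if 0 < j \<and> j \<le> k then Y i l * of_nat j else 0) else 0))"
    unfolding mmul_def Ee_def by (intro sum.cong) auto
  also have "\<dots> = (if 0 < j \<and> j \<le> k then Y i (j - 1) * of_nat j else 0)"
    by (subst sum_if_eq_single) auto
  finally show ?thesis .
qed

lemma mmul_F_left: "mmul (Suc k) (Ff k) Y i j = (if 0 < i \<and> i \<le> k then of_nat (k - (i - 1)) * Y (i - 1) j else 0)"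
proof -
  have "mmul (Suc k) (Ff k) Y i j = (\<Sum>l<Suc k. (if l = i - 1 then (if 0 < i \<and> i \<le> k then of_nat (k - l) * Y l j else 0) else 0))"
    unfolding mmul_def Ff_def by (intro sum.cong) auto
  also have "\<dots> = (if 0 < i \<and> i \<le> k then of_nat (k - (i - 1)) * Y (i - 1) j else 0)"
    by (subst sum_if_eq_single) auto
  finally show ?thesis .
qed

lemma mmul_F_right: "mmul (Suc k) Y (Ff k) i j = (if j < k then Y i (Suc j) * of_nat (k - j) else 0)"
proof -
  have "mmul (Suc k) Y (Ff k) i j = (\<Sum>l<Suc k. (if l = Suc j then (if j < k then Y i l * of_nat (k - j) else 0) else 0))"
    unfolding mmul_def Ff_def by (intro sum.cong) auto
  also have "\<dots> = (if j < k then Y i (Suc j) * of_nat (k - j) else 0)"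
    by (subst sum_if_eq_single) auto
  finally show ?thesis .
qed

lemma mmul_H_left: "mmul (Suc k) (Hh k) Y i j = (if i \<le> k then of_int (int k - 2 * int i) * Y i j else 0)"
proof -
  have "mmul (Suc k) (Hh k) Y i j = (\<Sum>l<Suc k. (if l = i then (if i \<le> k then of_int (int k - 2 * int i) * Y l j else 0) else 0))"
    unfolding mmul_def Hh_def by (intro sum.cong) auto
  also have "\<dots> = (if i \<le> k then of_int (int k - 2 * int i) * Y i j else 0)"
    by (subst sum_if_eq_single) auto
  finally show ?thesis .
qed

lemma mmul_H_right: "mmul (Suc k) Y (Hh k) i j = (if j \<le> k then Y i j * of_int (int k - 2 * int j) else 0)"
proof -
  have "mmul (Suc k) Y (Hh k) i j = (\<Sum>l<Suc k. (if l = j then (if j \<le> k then Y i l * of_int (int k - 2 * int j) else 0) else 0))"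
    unfolding mmul_def Hh_def by (intro sum.cong) auto
  also have "\<dots> = (if j \<le> k then Y i j * of_int (int k - 2 * int j) else 0)"
    by (subst sum_if_eq_single) auto
  finally show ?thesis .
qed

lemma mmul_mid_left: "mmul (Suc k) (mid (Suc k)) Y i j = (if i \<le> k then Y i j else 0)"
proof -
  have "mmul (Suc k) (mid (Suc k)) Y i j = (\<Sum>l<Suc k. (if l = i then (if i \<le> k then Y l j else 0) else 0))"
    unfolding mmul_def mid_def by (intro sum.cong) auto
  also have "\<dots> = (if i \<le> k then Y i j else 0)"
    by (subst sum_if_eq_single) auto
  finally show ?thesis .
qed

lemma mmul_mid_right: "mmul (Suc k) Y (mid (Suc k)) i j = (if j \<le> k then Y i j else 0)"
proof -
  have "mmul (Suc k) Y (mid (Suc k)) i j = (\<Sum>l<Suc k. (if l = j then (if j \<le> k then Y i l else 0) else 0))"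
    unfolding mmul_def mid_def by (intro sum.cong) auto
  also have "\<dots> = (if j \<le> k then Y i j else 0)"
    by (subst sum_if_eq_single) auto
  finally show ?thesis .
qed

lemma sum_mat_apply: "(\<Sum>x\<in>S. (f x :: mat)) i j = (\<Sum>x\<in>S. f x i j)"
  by (induction S rule: infinite_finite_induct) (auto simp: fa)

lemma mmul_assoc: "mmul d (mmul d A B) C = mmul d A (mmul d B C)"
  unfolding mmul_def
  by (auto simp: fun_eq_iff plus_fun_apply zero_fun_apply sum_distrib_left sum_distrib_right mult.assoc intro: sum.swap)

lemma mmul_add_left: "mmul d (A + B) C = mmul d A C + mmul d B C"
  unfolding mmul_def by (auto simp: fun_eq_iff plus_fun_apply zero_fun_apply distrib_right sum.distrib)

lemma mmul_add_right: "mmul d A (B + C) = mmul d A B + mmul d A C"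
  unfolding mmul_def by (auto simp: fun_eq_iff plus_fun_apply zero_fun_apply distrib_left sum.distrib)

lemma mmul_diff_left: "mmul d (A - B) C = mmul d A C - mmul d B C"
  unfolding mmul_def by (auto simp: fun_eq_iff plus_fun_apply zero_fun_apply left_diff_distrib sum_subtractf)

lemma mmul_diff_right: "mmul d A (B - C) = mmul d A B - mmul d A C"
  unfolding mmul_def by (auto simp: fun_eq_iff plus_fun_apply zero_fun_apply right_diff_distrib sum_subtractf)

lemma mmul_sm_left: "mmul d (sm a A) B = sm a (mmul d A B)"
  unfolding mmul_def sm_def by (auto simp: fun_eq_iff plus_fun_apply zero_fun_apply sum_distrib_left mult.assoc)

lemma mmul_sm_right: "mmul d A (sm a B) = sm a (mmul d A B)"
  unfolding mmul_def sm_def by (auto simp: fun_eq_iff plus_fun_apply zero_fun_apply sum_distrib_left mult.assoc mult.left_commute)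

lemma mmul_zero_left: "mmul d 0 B = 0"
  unfolding mmul_def by (auto simp: fun_eq_iff plus_fun_apply zero_fun_apply)

lemma mmul_zero_right: "mmul d A 0 = 0"
  unfolding mmul_def by (auto simp: fun_eq_iff plus_fun_apply zero_fun_apply)

lemma mmul_sum_left: "mmul d (\<Sum>x\<in>S. f x) C = (\<Sum>x\<in>S. mmul d (f x) C)"
  by (induction S rule: infinite_finite_induct) (simp_all add: mmul_zero_left mmul_add_left)

lemma mmul_sum_right: "mmul d C (\<Sum>x\<in>S. f x) = (\<Sum>x\<in>S. mmul d C (f x))"
  by (induction S rule: infinite_finite_induct) (simp_all add: mmul_zero_right mmul_add_right)

lemma sm_add: "sm a (A + B) = sm a A + sm a B"
  unfolding sm_def by (auto simp: fun_eq_iff plus_fun_apply zero_fun_apply distrib_left)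
lemma sm_diff: "sm a (A - B) = sm a A - sm a B"
  unfolding sm_def by (auto simp: fun_eq_iff plus_fun_apply zero_fun_apply right_diff_distrib)
lemma sm_add_scalar: "sm (a + b) A = sm a A + sm b A"
  unfolding sm_def by (auto simp: fun_eq_iff plus_fun_apply zero_fun_apply distrib_right)
lemma sm_diff_scalar: "sm (a - b) A = sm a A - sm b A"
  unfolding sm_def by (auto simp: fun_eq_iff plus_fun_apply zero_fun_apply left_diff_distrib)
lemma sm_sm: "sm a (sm b A) = sm (a * b) A"
  unfolding sm_def by (auto simp: fun_eq_iff plus_fun_apply zero_fun_apply)
lemma sm_one[simp]: "sm 1 A = A"
  unfolding sm_def by (auto simp: fun_eq_iff plus_fun_apply zero_fun_apply)
lemma sm_zero[simp]: "sm 0 A = 0"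
  unfolding sm_def by (auto simp: fun_eq_iff plus_fun_apply zero_fun_apply)
lemma sm_zero_right[simp]: "sm a 0 = 0"
  unfolding sm_def by (auto simp: fun_eq_iff plus_fun_apply zero_fun_apply)
lemma sm_minus: "sm a (- A) = - sm a A"
  unfolding sm_def by (auto simp: fun_eq_iff plus_fun_apply zero_fun_apply)
lemma sm_sum: "sm a (\<Sum>x\<in>S. f x) = (\<Sum>x\<in>S. sm a (f x))"
  by (induction S rule: infinite_finite_induct) (simp_all add: sm_add)
lemma sm_sum_scalar: "sm (\<Sum>x\<in>S. f x) A = (\<Sum>x\<in>S. sm (f x) A)"
  by (induction S rule: infinite_finite_induct) (simp_all add: sm_add_scalar)
lemma sm_apply: "sm a A i j = a * A i j"
  unfolding sm_def by simp

lemmas mmul_lin = mmul_add_left mmul_add_right mmul_diff_left mmul_diff_right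
  mmul_sm_left mmul_sm_right mmul_zero_left mmul_zero_right
lemmas sm_lin = sm_add sm_diff sm_sm sm_minus

lemma supp_mmul: "supp k A \<Longrightarrow> supp k B \<Longrightarrow> supp k (mmul (Suc k) A B)"
  unfolding supp_def mmul_def by auto
lemma supp_add: "supp k A \<Longrightarrow> supp k B \<Longrightarrow> supp k (A + B)"
  unfolding supp_def by (auto simp: fa)
lemma supp_diff: "supp k A \<Longrightarrow> supp k B \<Longrightarrow> supp k (A - B)"
  unfolding supp_def by (auto simp: fa)
lemma supp_sm: "supp k A \<Longrightarrow> supp k (sm a A)"
  unfolding supp_def sm_def by auto
lemma supp_zero: "supp k 0"
  unfolding supp_def by (auto simp: fa)
lemma supp_minus: "supp k A \<Longrightarrow> supp k (- A)"
  unfolding supp_def by (auto simp: fa)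
lemma supp_sum: "(\<And>x. x \<in> S \<Longrightarrow> supp k (f x)) \<Longrightarrow> supp k (\<Sum>x\<in>S. f x)"
  by (induction S rule: infinite_finite_induct) (simp_all add: supp_zero supp_add)
lemma supp_E: "supp k (Ee k)" unfolding supp_def Ee_def by auto
lemma supp_F: "supp k (Ff k)" unfolding supp_def Ff_def by auto
lemma supp_H: "supp k (Hh k)" unfolding supp_def Hh_def by auto
lemma supp_mid: "supp k (mid (Suc k))" unfolding supp_def mid_def by auto
lemma supp_gen: "supp k (gen k b)" unfolding gen_def by (auto simp: supp_E supp_F supp_H)
lemma supp_dualgen: "supp k (dualgen k b)"
  unfolding dualgen_def using supp_E supp_F supp_H unfolding supp_def by (auto simp: fa)

lemmas supp_intros = supp_mmul supp_add supp_diff supp_sm supp_zero supp_minus supp_E supp_F supp_H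
  supp_mid supp_gen supp_dualgen

lemma mid_left: "supp k Y \<Longrightarrow> mmul (Suc k) (mid (Suc k)) Y = Y"
  unfolding supp_def by (auto simp: fun_eq_iff plus_fun_apply zero_fun_apply mmul_mid_left)
lemma mid_right: "supp k Y \<Longrightarrow> mmul (Suc k) Y (mid (Suc k)) = Y"
  unfolding supp_def by (auto simp: fun_eq_iff plus_fun_apply zero_fun_apply mmul_mid_right)

abbreviation mm :: "nat \<Rightarrow> mat \<Rightarrow> mat \<Rightarrow> mat" where
  "mm k A B \<equiv> mmul (Suc k) A B"

definition cm :: "nat \<Rightarrow> mat \<Rightarrow> mat \<Rightarrow> mat" where
  "cm k A B = mm k A B - mm k B A"

definition cc :: "nat \<Rightarrow> complex" where
  "cc k = of_nat k / 2 + (of_nat k)^2 / 4"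

lemmas mmul_gens = mmul_E_left mmul_E_right mmul_F_left mmul_F_right mmul_H_left mmul_H_right
  mmul_mid_left mmul_mid_right

lemma rel_EF: "cm k (Ee k) (Ff k) = Hh k"
  unfolding cm_def
  by (simp add: fun_eq_iff fa mmul_gens) (auto simp: Ee_def Ff_def Hh_def of_nat_diff algebra_simps)

lemma rel_HE: "cm k (Hh k) (Ee k) = sm 2 (Ee k)"
  unfolding cm_def
  by (simp add: fun_eq_iff fa sm_def mmul_gens) (auto simp: Ee_def Ff_def Hh_def of_nat_diff algebra_simps)

lemma rel_HF: "cm k (Hh k) (Ff k) = sm (-2) (Ff k)"
  unfolding cm_def
  by (simp add: fun_eq_iff fa sm_def mmul_gens) (auto simp: Ee_def Ff_def Hh_def of_nat_diff algebra_simps)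

lemma casimir: "sm (1/2) (mm k (Ee k) (Ff k)) + sm (1/4) (mm k (Hh k) (Hh k)) + sm (1/2) (mm k (Ff k) (Ee k))
   = sm (cc k) (mid (Suc k))"
  by (simp add: fun_eq_iff fa sm_def mmul_gens) (auto simp: cc_def Ee_def Ff_def Hh_def mid_def of_nat_diff field_simps power2_eq_square)

lemma cm_add_right: "cm k X (A + B) = cm k X A + cm k X B"
  unfolding cm_def by (simp add: mmul_lin algebra_simps)
lemma cm_diff_right: "cm k X (A - B) = cm k X A - cm k X B"
  unfolding cm_def by (simp add: mmul_lin algebra_simps)
lemma cm_sm_right: "cm k X (sm a A) = sm a (cm k X A)"
  unfolding cm_def by (simp add: mmul_lin sm_diff)
lemma cm_zero_right: "cm k X 0 = 0"
  unfolding cm_def by (simp add: mmul_lin)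
lemma cm_add_left: "cm k (A + B) X = cm k A X + cm k B X"
  unfolding cm_def by (simp add: mmul_lin algebra_simps)
lemma cm_diff_left: "cm k (A - B) X = cm k A X - cm k B X"
  unfolding cm_def by (simp add: mmul_lin algebra_simps)
lemma cm_sm_left: "cm k (sm a A) X = sm a (cm k A X)"
  unfolding cm_def by (simp add: mmul_lin sm_diff)
lemma cm_zero_left: "cm k 0 X = 0"
  unfolding cm_def by (simp add: mmul_lin)
lemma cm_sum_right: "cm k X (\<Sum>x\<in>S. f x) = (\<Sum>x\<in>S. cm k X (f x))"
  by (induction S rule: infinite_finite_induct) (simp_all add: cm_zero_right cm_add_right)
lemma cm_self: "cm k X X = 0"
  unfolding cm_def by simp

lemmas cm_lin = cm_add_right cm_diff_right cm_sm_right cm_zero_right cm_add_left cm_diff_left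
  cm_sm_left cm_zero_left

lemma cm_mm: "cm k X (mm k A B) = mm k (cm k X A) B + mm k A (cm k X B)"
  unfolding cm_def by (simp add: mmul_lin mmul_assoc algebra_simps)

lemma jacobi: "cm k X (cm k Y Z) = cm k (cm k X Y) Z + cm k Y (cm k X Z)"
  unfolding cm_def by (simp add: mmul_lin mmul_assoc algebra_simps)

lemma supp_cm: "supp k A \<Longrightarrow> supp k B \<Longrightarrow> supp k (cm k A B)"
  unfolding cm_def by (intro supp_intros)

definition Psi :: "nat \<Rightarrow> mat \<Rightarrow> mat" where
  "Psi k Y = cm k (Ff k) (cm k (Ee k) Y) + sm (1/2) (cm k (Hh k) Y)
     + sm (1/4) (cm k (Hh k) (cm k (Hh k) Y))"

definition Phi :: "nat \<Rightarrow> mat \<Rightarrow> mat" where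
  "Phi k Y = (\<Sum>b<3. mm k (gen k b) (mm k Y (dualgen k b)))"

lemma Phi_expand: "Phi k Y = mm k (Ee k) (mm k Y (sm (1/2) (Ff k))) + mm k (Hh k) (mm k Y (sm (1/4) (Hh k)))
   + mm k (Ff k) (mm k Y (sm (1/2) (Ee k)))"
  unfolding Phi_def by (simp add: numeral_3_eq_3 gen_def dualgen_def sm_def algebra_simps)

lemma supp_Psi: "supp k Y \<Longrightarrow> supp k (Psi k Y)"
  unfolding Psi_def by (intro supp_intros supp_cm)
lemma supp_Phi: "supp k Y \<Longrightarrow> supp k (Phi k Y)"
  unfolding Phi_expand by (intro supp_intros)

lemma Phi_Psi: assumes "supp k Y" shows "Phi k Y = sm (cc k) Y - sm (1/2) (Psi k Y)"
  using assms unfolding Phi_expand Psi_def cm_def supp_def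
  apply (simp only: mmul_sm_left mmul_sm_right)
  apply (simp add: fun_eq_iff fa sm_def mmul_gens)
  apply (auto simp: cc_def of_nat_diff field_simps power2_eq_square)
  done

lemma cm_anti: "cm k A B = - cm k B A"
  unfolding cm_def by simp

lemma rel_FE: "cm k (Ff k) (Ee k) = sm (-1) (Hh k)"
  using rel_EF[of k] cm_anti[of k "Ff k" "Ee k"] by (simp add: sm_def fun_eq_iff)
lemma rel_EH: "cm k (Ee k) (Hh k) = sm (-2) (Ee k)"
  using rel_HE[of k] cm_anti[of k "Ee k" "Hh k"] by (simp add: sm_def fun_eq_iff)
lemma rel_FH: "cm k (Ff k) (Hh k) = sm 2 (Ff k)"
  using rel_HF[of k] cm_anti[of k "Ff k" "Hh k"] by (simp add: sm_def fun_eq_iff)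

lemmas rels = rel_EF rel_FE rel_HE rel_EH rel_HF rel_FH cm_self

lemma jac_E_F: "cm k (Ee k) (cm k (Ff k) Z) = cm k (Hh k) Z + cm k (Ff k) (cm k (Ee k) Z)"
  using jacobi[of k "Ee k" "Ff k" Z] by (simp add: rel_EF)
lemma jac_E_H: "cm k (Ee k) (cm k (Hh k) Z) = sm (-2) (cm k (Ee k) Z) + cm k (Hh k) (cm k (Ee k) Z)"
  using jacobi[of k "Ee k" "Hh k" Z] by (simp add: rel_EH cm_sm_left)
lemma jac_F_E: "cm k (Ff k) (cm k (Ee k) Z) = sm (-1) (cm k (Hh k) Z) + cm k (Ee k) (cm k (Ff k) Z)"
  using jacobi[of k "Ff k" "Ee k" Z] by (simp add: rel_FE cm_sm_left)
lemma jac_F_H: "cm k (Ff k) (cm k (Hh k) Z) = sm 2 (cm k (Ff k) Z) + cm k (Hh k) (cm k (Ff k) Z)"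
  using jacobi[of k "Ff k" "Hh k" Z] by (simp add: rel_FH cm_sm_left)

lemma Psi_E: "cm k (Ee k) (Psi k Y) = Psi k (cm k (Ee k) Y)"
  unfolding Psi_def
  apply (simp only: cm_lin jac_E_F jac_E_H sm_lin)
  apply (rule ext)+
  apply (simp only: fa sm_def)
  apply (simp add: algebra_simps)
  done

lemma Psi_alt: "Psi k Y = cm k (Ee k) (cm k (Ff k) Y) - sm (1/2) (cm k (Hh k) Y)
     + sm (1/4) (cm k (Hh k) (cm k (Hh k) Y))"
  unfolding Psi_def
  apply (simp only: cm_lin jac_E_F jac_E_H sm_lin)
  apply (rule ext)+
  apply (simp only: fa sm_def)
  apply (simp add: algebra_simps)
  done

lemma Psi_F: "cm k (Ff k) (Psi k Y) = Psi k (cm k (Ff k) Y)"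
  unfolding Psi_alt
  apply (simp only: cm_lin jac_F_E jac_F_H sm_lin)
  apply (rule ext)+
  apply (simp only: fa sm_def)
  apply (simp add: algebra_simps)
  done

lemma Phi_E: "cm k (Ee k) (Phi k Y) = Phi k (cm k (Ee k) Y)"
  unfolding Phi_expand
  apply (simp only: cm_lin cm_mm rels mmul_lin sm_lin)
  apply (rule ext)+
  apply (simp only: fa sm_def)
  apply (simp add: algebra_simps)
  done

definition band :: "int \<Rightarrow> mat \<Rightarrow> mat" where
  "band j Y = (\<lambda>r s. if j = int s - int r then Y r s else 0)"

lemma band_add: "band j (A + B) = band j A + band j B"
  unfolding band_def by (auto simp: fun_eq_iff fa)
lemma band_diff: "band j (A - B) = band j A - band j B"
  unfolding band_def by (auto simp: fun_eq_iff fa)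
lemma band_sm: "band j (sm a A) = sm a (band j A)"
  unfolding band_def sm_def by (auto simp: fun_eq_iff)
lemma band_zero: "band j 0 = 0"
  unfolding band_def by (auto simp: fun_eq_iff fa)
lemma band_sum: "band j (\<Sum>x\<in>S. f x) = (\<Sum>x\<in>S. band j (f x))"
  by (induction S rule: infinite_finite_induct) (simp_all add: band_zero band_add)
lemma supp_band: "supp k Y \<Longrightarrow> supp k (band j Y)"
  unfolding supp_def band_def by auto
lemma band_band_same: "band j (band j Y) = band j Y"
  unfolding band_def by (auto simp: fun_eq_iff)
lemma band_band_diff: "i \<noteq> j \<Longrightarrow> band i (band j Y) = 0"
  unfolding band_def by (auto simp: fun_eq_iff fa)

lemma band_E_left: "band j (mm k (Ee k) Y) = mm k (Ee k) (band (j - 1) Y)"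
  unfolding band_def by (simp add: fun_eq_iff mmul_gens) 
lemma band_E_right: "band j (mm k Y (Ee k)) = mm k (band (j - 1) Y) (Ee k)"
  unfolding band_def by (simp add: fun_eq_iff mmul_gens) 
lemma band_F_left: "band j (mm k (Ff k) Y) = mm k (Ff k) (band (j + 1) Y)"
  unfolding band_def by (simp add: fun_eq_iff mmul_gens) 
lemma band_F_right: "band j (mm k Y (Ff k)) = mm k (band (j + 1) Y) (Ff k)"
  unfolding band_def by (simp add: fun_eq_iff mmul_gens) 
lemma band_H_left: "band j (mm k (Hh k) Y) = mm k (Hh k) (band j Y)"
  unfolding band_def by (simp add: fun_eq_iff mmul_gens) 
lemma band_H_right: "band j (mm k Y (Hh k)) = mm k (band j Y) (Hh k)"
  unfolding band_def by (simp add: fun_eq_iff mmul_gens) 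

lemma band_cm_E: "band j (cm k (Ee k) Y) = cm k (Ee k) (band (j - 1) Y)"
  unfolding cm_def by (simp add: band_diff band_E_left band_E_right)
lemma band_cm_F: "band j (cm k (Ff k) Y) = cm k (Ff k) (band (j + 1) Y)"
  unfolding cm_def by (simp add: band_diff band_F_left band_F_right)
lemma band_cm_H: "band j (cm k (Hh k) Y) = cm k (Hh k) (band j Y)"
  unfolding cm_def by (simp add: band_diff band_H_left band_H_right)

lemma band_Psi: "band j (Psi k Y) = Psi k (band j Y)"
  unfolding Psi_def by (simp add: band_add band_sm band_cm_E band_cm_F band_cm_H)

lemma H_weight: assumes "supp k Y" "band j Y = Y" shows "cm k (Hh k) Y = sm (2 * of_int j) Y"
proof -
  have Y: "Y r s = (if j = int s - int r then Y r s else 0)" for r s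
  proof -
    have "Y r s = band j Y r s" using assms(2) by simp
    then show ?thesis unfolding band_def by simp
  qed
  show ?thesis
    unfolding cm_def
  proof (rule ext, rule ext)
    fix r s
    show "(mm k (Hh k) Y - mm k Y (Hh k)) r s = sm (2 * of_int j) Y r s"
    proof (cases "j = int s - int r")
      case True
      then have jj: "(of_int j :: complex) = of_nat s - of_nat r" by simp
      show ?thesis using assms(1) unfolding supp_def
        by (auto simp: fa mmul_gens sm_def jj algebra_simps)
    next
      case False
      then have "Y r s = 0" using Y[of r s] by simp
      then show ?thesis by (simp add: fa mmul_gens sm_def)
    qed
  qed
qed

lemma band_decomp: assumes "\<And>j. int m < \<bar>j\<bar> \<Longrightarrow> band j Y = 0"
  shows "Y = (\<Sum>j\<in>{- int m..int m}. band j Y)"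
proof (rule ext, rule ext)
  fix r s
  have "(\<Sum>j\<in>{- int m..int m}. band j Y) r s = (\<Sum>j\<in>{- int m..int m}. (if j = int s - int r then Y r s else 0))"
    unfolding sum_mat_apply band_def by (intro sum.cong) auto
  also have "\<dots> = (if int s - int r \<in> {- int m..int m} then Y r s else 0)"
    by (simp add: sum.delta')
  also have "\<dots> = Y r s"
  proof (cases "int s - int r \<in> {- int m..int m}")
    case False
    then have "band (int s - int r) Y = 0" by (intro assms) auto
    then have "band (int s - int r) Y r s = 0" by (simp add: fa)
    then show ?thesis using False unfolding band_def by simp
  qed simp
  finally show "Y r s = (\<Sum>j\<in>{- int m..int m}. band j Y) r s" by simp
qed

fun Sm :: "nat \<Rightarrow> nat \<Rightarrow> mat set" where
  "Sm k 0 = range (\<lambda>a. sm a (mid (Suc k)))"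
| "Sm k (Suc m) = {Y. \<exists>Z. (\<forall>b<3. Z b \<in> Sm k m) \<and> Y = (\<Sum>b<3. mm k (gen k b) (Z b))}"

lemma Sm_SucI: "(\<And>b. b < 3 \<Longrightarrow> Z b \<in> Sm k m) \<Longrightarrow> Y = (\<Sum>b<3. mm k (gen k b) (Z b)) \<Longrightarrow> Y \<in> Sm k (Suc m)"
  by auto

lemma Sm_supp: "Y \<in> Sm k m \<Longrightarrow> supp k Y"
proof (induction m arbitrary: Y)
  case 0 then show ?case by (auto intro: supp_intros)
next
  case (Suc m)
  then obtain Z where Z: "\<forall>b<3. Z b \<in> Sm k m" "Y = (\<Sum>b<3. mm k (gen k b) (Z b))" by auto
  show ?case unfolding Z(2) using Z(1) Suc.IH by (intro supp_sum supp_intros) auto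
qed

lemma Sm_zero: "0 \<in> Sm k m"
proof (induction m)
  case 0
  have "(0::mat) = sm 0 (mid (Suc k))" by simp
  then show ?case by (simp only: Sm.simps) (rule range_eqI)
next
  case (Suc m)
  show ?case by (rule Sm_SucI[where Z = "\<lambda>_. 0"]) (simp_all add: mmul_zero_right Suc)
qed

lemma Sm_add: "X \<in> Sm k m \<Longrightarrow> Y \<in> Sm k m \<Longrightarrow> X + Y \<in> Sm k m"
proof (induction m arbitrary: X Y)
  case 0
  then obtain a b where "X = sm a (mid (Suc k))" "Y = sm b (mid (Suc k))" by auto
  then have "X + Y = sm (a + b) (mid (Suc k))" by (simp add: sm_add_scalar)
  then show ?case by simp
next
  case (Suc m)
  from Suc.prems obtain Z1 where Z1: "\<forall>b<3. Z1 b \<in> Sm k m" "X = (\<Sum>b<3. mm k (gen k b) (Z1 b))" by auto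
  from Suc.prems obtain Z2 where Z2: "\<forall>b<3. Z2 b \<in> Sm k m" "Y = (\<Sum>b<3. mm k (gen k b) (Z2 b))" by auto
  show ?case
    by (rule Sm_SucI[where Z = "\<lambda>b. Z1 b + Z2 b"]) (use Z1 Z2 Suc.IH in \<open>simp_all add: mmul_add_right sum.distrib\<close>)
qed

lemma Sm_sm: "Y \<in> Sm k m \<Longrightarrow> sm a Y \<in> Sm k m"
proof (induction m arbitrary: Y)
  case 0
  then obtain b where "Y = sm b (mid (Suc k))" by auto
  then have "sm a Y = sm (a * b) (mid (Suc k))" by (simp add: sm_sm)
  then show ?case by simp
next
  case (Suc m)
  from Suc.prems obtain Z where Z: "\<forall>b<3. Z b \<in> Sm k m" "Y = (\<Sum>b<3. mm k (gen k b) (Z b))" by auto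
  show ?case
    by (rule Sm_SucI[where Z = "\<lambda>b. sm a (Z b)"]) (use Z Suc.IH in \<open>simp_all add: sm_sum mmul_sm_right\<close>)
qed

lemma Sm_diff: "X \<in> Sm k m \<Longrightarrow> Y \<in> Sm k m \<Longrightarrow> X - Y \<in> Sm k m"
proof -
  assume a: "X \<in> Sm k m" "Y \<in> Sm k m"
  have "X - Y = X + sm (-1) Y" by (simp add: fun_eq_iff fa sm_def)
  then show ?thesis using a Sm_add Sm_sm by metis
qed

lemma Sm_sum: "(\<And>x. x \<in> S \<Longrightarrow> f x \<in> Sm k m) \<Longrightarrow> (\<Sum>x\<in>S. f x) \<in> Sm k m"
  by (induction S rule: infinite_finite_induct) (simp_all add: Sm_zero Sm_add)

lemma Sm_gen: assumes "Z \<in> Sm k m" "b < 3" shows "mm k (gen k b) Z \<in> Sm k (Suc m)"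
proof -
  have "(\<Sum>b'<3. mm k (gen k b') ((\<lambda>b'. if b' = b then Z else 0) b'))
      = (\<Sum>b'<3. (if b' = b then mm k (gen k b) Z else 0))"
    by (intro sum.cong) (auto simp: mmul_zero_right)
  also have "\<dots> = mm k (gen k b) Z" using assms(2) by (simp add: sum.delta')
  finally have "mm k (gen k b) Z = (\<Sum>b'<3. mm k (gen k b') ((\<lambda>b'. if b' = b then Z else 0) b'))" by simp
  then show ?thesis
    by (intro Sm_SucI[where Z = "\<lambda>b'. if b' = b then Z else 0"]) (use assms in \<open>auto simp: Sm_zero\<close>)
qed

lemma gen_cases: "b < 3 \<Longrightarrow> gen k b = Ee k \<or> gen k b = Hh k \<or> gen k b = Ff k"
  unfolding gen_def by auto

lemma gen_E: "gen k 0 = Ee k" and gen_H: "gen k 1 = Hh k" and gen_F: "gen k 2 = Ff k"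
  unfolding gen_def by auto

lemma cm_gen: assumes "X \<in> {Ee k, Ff k, Hh k}" "b < 3"
  shows "\<exists>c b'. b' < 3 \<and> cm k X (gen k b) = sm c (gen k b')"
proof -
  have s1: "cm k X (gen k b) = sm c (gen k b') \<Longrightarrow> b' < 3 \<Longrightarrow> ?thesis" for c b' by blast
  have z: "cm k X (gen k b) = 0 \<Longrightarrow> ?thesis" using s1[of 0 0] by simp
  from assms(2) have "b = 0 \<or> b = 1 \<or> b = 2" by auto
  moreover from assms(1) have "X = Ee k \<or> X = Ff k \<or> X = Hh k" by auto
  ultimately show ?thesis
  proof (elim disjE)
    assume "b = 0" "X = Ee k" then show ?thesis by (intro z) (simp add: gen_def rels)
  next
    assume "b = 0" "X = Ff k" then show ?thesis by (intro s1[of "-1" 1]) (simp_all add: gen_def rels)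
  next
    assume "b = 0" "X = Hh k" then show ?thesis by (intro s1[of "2" 0]) (simp_all add: gen_def rels)
  next
    assume "b = 1" "X = Ee k" then show ?thesis by (intro s1[of "-2" 0]) (simp_all add: gen_def rels)
  next
    assume "b = 1" "X = Ff k" then show ?thesis by (intro s1[of "2" 2]) (simp_all add: gen_def rels)
  next
    assume "b = 1" "X = Hh k" then show ?thesis by (intro z) (simp add: gen_def rels)
  next
    assume "b = 2" "X = Ee k" then show ?thesis by (intro s1[of "1" 1]) (simp_all add: gen_def rels)
  next
    assume "b = 2" "X = Ff k" then show ?thesis by (intro z) (simp add: gen_def rels)
  next
    assume "b = 2" "X = Hh k" then show ?thesis by (intro s1[of "-2" 2]) (simp_all add: gen_def rels)
  qed
qed

lemma cm_mid: "supp k X \<Longrightarrow> cm k X (mid (Suc k)) = 0"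
  unfolding cm_def by (simp add: mid_left mid_right)

lemma Sm_cm: assumes "X \<in> {Ee k, Ff k, Hh k}" shows "Y \<in> Sm k m \<Longrightarrow> cm k X Y \<in> Sm k m"
proof (induction m arbitrary: Y)
  case 0
  then obtain a where "Y = sm a (mid (Suc k))" by auto
  moreover have "supp k X" using assms by (auto intro: supp_intros)
  ultimately have "cm k X Y = 0" by (simp add: cm_sm_right cm_mid)
  then show ?case using Sm_zero[of k 0] by simp
next
  case (Suc m)
  from Suc.prems obtain Z where Z: "\<forall>b<3. Z b \<in> Sm k m" "Y = (\<Sum>b<3. mm k (gen k b) (Z b))" by auto
  have "cm k X Y = (\<Sum>b<3. mm k (cm k X (gen k b)) (Z b) + mm k (gen k b) (cm k X (Z b)))"
    unfolding Z(2) by (simp add: cm_sum_right cm_mm)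
  also have "\<dots> \<in> Sm k (Suc m)"
  proof (rule Sm_sum)
    fix b assume "b \<in> {..<3::nat}"
    then have b: "b < 3" by simp
    obtain c b' where cb: "b' < 3" "cm k X (gen k b) = sm c (gen k b')" using cm_gen[OF assms b] by blast
    have "mm k (cm k X (gen k b)) (Z b) = mm k (gen k b') (sm c (Z b))"
      by (simp add: cb mmul_sm_left mmul_sm_right)
    also have "\<dots> \<in> Sm k (Suc m)" using Z(1) b cb by (intro Sm_gen Sm_sm) auto
    finally have 1: "mm k (cm k X (gen k b)) (Z b) \<in> Sm k (Suc m)" .
    have 2: "mm k (gen k b) (cm k X (Z b)) \<in> Sm k (Suc m)" using Z(1) b Suc.IH by (intro Sm_gen) auto
    show "mm k (cm k X (gen k b)) (Z b) + mm k (gen k b) (cm k X (Z b)) \<in> Sm k (Suc m)"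
      using 1 2 by (rule Sm_add)
  qed
  finally show ?case .
qed

definition off :: "nat \<Rightarrow> int" where
  "off b = (if b = 0 then 1 else if b = 1 then 0 else -1)"

lemma band_gen: "b < 3 \<Longrightarrow> band j (mm k (gen k b) Z) = mm k (gen k b) (band (j - off b) Z)"
  unfolding gen_def off_def by (auto simp: band_E_left band_F_left band_H_left)

lemma band_mid: "band j (sm a (mid (Suc k))) = sm (if j = 0 then a else 0) (mid (Suc k))"
  unfolding band_def sm_def mid_def by (auto simp: fun_eq_iff)

lemma Sm_band: "Y \<in> Sm k m \<Longrightarrow> band j Y \<in> Sm k m"
proof (induction m arbitrary: Y j)
  case 0
  then obtain a where "Y = sm a (mid (Suc k))" by auto
  then have "band j Y = sm (if j = 0 then a else 0) (mid (Suc k))" by (simp add: band_mid)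
  then show ?case unfolding Sm.simps by (rule range_eqI)
next
  case (Suc m)
  from Suc.prems obtain Z where Z: "\<forall>b<3. Z b \<in> Sm k m" "Y = (\<Sum>b<3. mm k (gen k b) (Z b))" by auto
  show ?case
  proof (rule Sm_SucI[where Z = "\<lambda>b. band (j - off b) (Z b)"])
    show "band (j - off b) (Z b) \<in> Sm k m" if "b < 3" for b using Z(1) that Suc.IH by auto
    show "band j Y = (\<Sum>b<3. mm k (gen k b) (band (j - off b) (Z b)))"
      unfolding Z(2) band_sum by (intro sum.cong) (auto simp: band_gen)
  qed
qed

lemma Sm_band_zero: "Y \<in> Sm k m \<Longrightarrow> int m < \<bar>j\<bar> \<Longrightarrow> band j Y = 0"
proof (induction m arbitrary: Y j)
  case 0
  then obtain a where "Y = sm a (mid (Suc k))" by auto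
  then show ?case using 0 by (simp add: band_mid)
next
  case (Suc m)
  from Suc.prems obtain Z where Z: "\<forall>b<3. Z b \<in> Sm k m" "Y = (\<Sum>b<3. mm k (gen k b) (Z b))" by auto
  have "band j Y = (\<Sum>b<3. mm k (gen k b) (band (j - off b) (Z b)))"
    unfolding Z(2) band_sum by (intro sum.cong) (auto simp: band_gen)
  also have "\<dots> = (\<Sum>b<3. mm k (gen k b) 0)"
  proof (intro sum.cong refl)
    fix b assume "b \<in> {..<3::nat}"
    then have "int m < \<bar>j - off b\<bar>" using Suc.prems(2) by (auto simp: off_def)
    then show "mm k (gen k b) (band (j - off b) (Z b)) = mm k (gen k b) 0"
      using Suc.IH Z(1) \<open>b \<in> {..<3}\<close> by auto
  qed
  also have "\<dots> = 0" by (simp add: mmul_zero_right)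
  finally show ?case .
qed

lemma Sm_Psi: "Y \<in> Sm k m \<Longrightarrow> Psi k Y \<in> Sm k m"
  unfolding Psi_def by (intro Sm_add Sm_sm Sm_cm) auto

definition prodlist :: "nat \<Rightarrow> mat list \<Rightarrow> mat" where
  "prodlist k Ms = foldr (mm k) Ms (mid (Suc k))"

lemma prodlist_Nil[simp]: "prodlist k [] = mid (Suc k)"
  unfolding prodlist_def by simp
lemma prodlist_Cons[simp]: "prodlist k (M # Ms) = mm k M (prodlist k Ms)"
  unfolding prodlist_def by simp
lemma supp_prodlist: "(\<And>M. M \<in> set Ms \<Longrightarrow> supp k M) \<Longrightarrow> supp k (prodlist k Ms)"
  by (induction Ms) (auto intro: supp_intros)
lemma prodlist_append: "(\<And>M. M \<in> set Ns \<Longrightarrow> supp k M) \<Longrightarrow>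
    prodlist k (Ms @ Ns) = mm k (prodlist k Ms) (prodlist k Ns)"
  by (induction Ms) (auto simp: mid_left supp_prodlist mmul_assoc)

lemma dualgen_sm: "\<exists>c b'. b' < 3 \<and> dualgen k b = sm c (gen k b')"
proof -
  have s1: "dualgen k b = sm c (gen k b') \<Longrightarrow> b' < 3 \<Longrightarrow> ?thesis" for c b' by blast
  show ?thesis
  proof (cases "b = 0")
    case True then show ?thesis by (intro s1[of "1/2" 2]) (auto simp: dualgen_def gen_def sm_def fun_eq_iff)
  next
    case False
    show ?thesis
    proof (cases "b = 1")
      case True then show ?thesis by (intro s1[of "1/4" 1]) (auto simp: dualgen_def gen_def sm_def fun_eq_iff)
    next
      case False
      then show ?thesis using \<open>b \<noteq> 0\<close>
        by (intro s1[of "1/2" 0]) (auto simp: dualgen_def gen_def sm_def fun_eq_iff)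
    qed
  qed
qed

lemma Sm_prod_dual: "prodlist k (map (\<lambda>x. dualgen k (\<alpha> x)) L) \<in> Sm k (length L)"
proof (induction L)
  case Nil
  have "mid (Suc k) = sm 1 (mid (Suc k))" by simp
  then show ?case by (simp only: list.map prodlist_Nil list.size Sm.simps) (rule range_eqI)
next
  case (Cons x L)
  obtain c b' where cb: "b' < 3" "dualgen k (\<alpha> x) = sm c (gen k b')" using dualgen_sm by blast
  have "prodlist k (map (\<lambda>x. dualgen k (\<alpha> x)) (x # L)) = mm k (gen k b') (sm c (prodlist k (map (\<lambda>x. dualgen k (\<alpha> x)) L)))"
    by (simp add: cb mmul_sm_left mmul_sm_right)
  also have "\<dots> \<in> Sm k (Suc (length L))" using Cons cb by (intro Sm_gen Sm_sm) auto
  finally show ?case by simp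
qed

declare sum.lessThan_Suc[simp del]

lemma Psi_add: "Psi k (A + B) = Psi k A + Psi k B"
  unfolding Psi_def by (simp add: cm_lin sm_lin algebra_simps)
lemma Psi_sm: "Psi k (sm a A) = sm a (Psi k A)"
  unfolding Psi_def by (simp add: cm_lin sm_lin sm_add mult.commute)
lemma Psi_zero: "Psi k 0 = 0"
  unfolding Psi_def by (simp add: cm_lin)
lemma Psi_sum: "Psi k (\<Sum>x\<in>S. f x) = (\<Sum>x\<in>S. Psi k (f x))"
  by (induction S rule: infinite_finite_induct) (simp_all add: Psi_zero Psi_add)

lemma Psip_add: "(Psi k ^^ r) (A + B) = (Psi k ^^ r) A + (Psi k ^^ r) B"
  by (induction r) (simp_all add: Psi_add)
lemma Psip_sm: "(Psi k ^^ r) (sm a A) = sm a ((Psi k ^^ r) A)"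
  by (induction r) (simp_all add: Psi_sm)
lemma Psip_zero: "(Psi k ^^ r) 0 = 0"
  by (induction r) (simp_all add: Psi_zero)

definition opoly :: "nat \<Rightarrow> complex poly \<Rightarrow> mat \<Rightarrow> mat" where
  "opoly k p Y = (\<Sum>r<Suc (degree p). sm (coeff p r) ((Psi k ^^ r) Y))"

lemma opoly_bound: assumes "degree p < N"
  shows "opoly k p Y = (\<Sum>r<N. sm (coeff p r) ((Psi k ^^ r) Y))"
proof -
  have "(\<Sum>r<N. sm (coeff p r) ((Psi k ^^ r) Y)) = (\<Sum>r<Suc (degree p). sm (coeff p r) ((Psi k ^^ r) Y))"
  proof (rule sum.mono_neutral_right)
    show "\<forall>i\<in>{..<N} - {..<Suc (degree p)}. sm (coeff p i) ((Psi k ^^ i) Y) = 0"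
      by (auto simp: coeff_eq_0)
  qed (use assms in auto)
  then show ?thesis unfolding opoly_def by simp
qed

lemma opoly_add: "opoly k (p + q) Y = opoly k p Y + opoly k q Y"
proof -
  define N where "N = Suc (max (degree p) (degree q))"
  have "degree (p + q) < N" unfolding N_def using degree_add_le_max[of p q] by linarith
  then show ?thesis
    by (subst (1 2 3) opoly_bound[where N = N]) (auto simp: N_def sm_add_scalar sum.distrib)
qed

lemma opoly_smult: "opoly k (smult a p) Y = sm a (opoly k p Y)"
proof -
  have "degree (smult a p) < Suc (degree p)" using degree_smult_le[of a p] by linarith
  then show ?thesis
    by (subst (1 2) opoly_bound[where N = "Suc (degree p)"]) (auto simp: sm_sum sm_sm)
qed

lemma opoly_pCons: "opoly k (pCons a p) Y = sm a Y + Psi k (opoly k p Y)"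
proof -
  define N where "N = Suc (degree p)"
  have d1: "degree (pCons a p) < Suc N" unfolding N_def by (simp add: degree_pCons_le le_imp_less_Suc)
  have "opoly k (pCons a p) Y = (\<Sum>r<Suc N. sm (coeff (pCons a p) r) ((Psi k ^^ r) Y))"
    by (rule opoly_bound[OF d1])
  also have "\<dots> = sm a Y + (\<Sum>r<N. sm (coeff p r) ((Psi k ^^ Suc r) Y))"
    by (subst sum.lessThan_Suc_shift) simp
  also have "(\<Sum>r<N. sm (coeff p r) ((Psi k ^^ Suc r) Y)) = Psi k (opoly k p Y)"
    unfolding opoly_def N_def by (simp add: Psi_sum Psi_sm)
  finally show ?thesis .
qed

lemma opoly_0: "opoly k 0 Y = 0"
  unfolding opoly_def by simp

lemma opoly_const: "opoly k [:a:] Y = sm a Y"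
  using opoly_pCons[of k a 0 Y] by (simp add: opoly_0 Psi_zero)

lemma opoly_one: "opoly k 1 Y = Y"
  using opoly_const[of k 1 Y] by (simp add: one_pCons)

lemma opoly_lin_add: "opoly k p (A + B) = opoly k p A + opoly k p B"
  unfolding opoly_def by (simp add: Psip_add sm_add sum.distrib)
lemma opoly_lin_sm: "opoly k p (sm a A) = sm a (opoly k p A)"
  unfolding opoly_def by (simp add: Psip_sm sm_sm sm_sum mult.commute)
lemma opoly_lin_zero: "opoly k p 0 = 0"
  unfolding opoly_def by (simp add: Psip_zero)
lemma opoly_lin_sum: "opoly k p (\<Sum>x\<in>S. f x) = (\<Sum>x\<in>S. opoly k p (f x))"
  by (induction S rule: infinite_finite_induct) (simp_all add: opoly_lin_zero opoly_lin_add)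
lemma opoly_sum_poly: "opoly k (\<Sum>x\<in>S. f x) Y = (\<Sum>x\<in>S. opoly k (f x) Y)"
  by (induction S rule: infinite_finite_induct) (simp_all add: opoly_0 opoly_add)

lemma opoly_mult: "opoly k (p * q) Y = opoly k p (opoly k q Y)"
proof (induction p)
  case 0 then show ?case by (simp add: opoly_0)
next
  case (pCons a p)
  have "pCons a p * q = smult a q + pCons 0 (p * q)" by simp
  then have "opoly k (pCons a p * q) Y = sm a (opoly k q Y) + Psi k (opoly k (p * q) Y)"
    by (simp add: opoly_add opoly_smult opoly_pCons)
  also have "\<dots> = opoly k (pCons a p) (opoly k q Y)"
    by (simp add: opoly_pCons pCons.IH)
  finally show ?case .
qed

lemma opoly_lin: "opoly k [:-a, 1:] Y = Psi k Y - sm a Y"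
  using opoly_pCons[of k "-a" "[:1:]" Y] by (simp add: opoly_const fun_eq_iff fa sm_def)

lemma opoly_band: "band j (opoly k p Y) = opoly k p (band j Y)"
proof -
  have "band j ((Psi k ^^ r) Y) = (Psi k ^^ r) (band j Y)" for r
    by (induction r) (simp_all add: band_Psi)
  then show ?thesis unfolding opoly_def by (simp add: band_sum band_sm)
qed

lemma opoly_cmE: "cm k (Ee k) (opoly k p Y) = opoly k p (cm k (Ee k) Y)"
proof -
  have "cm k (Ee k) ((Psi k ^^ r) Y) = (Psi k ^^ r) (cm k (Ee k) Y)" for r
    by (induction r) (simp_all add: Psi_E)
  then show ?thesis unfolding opoly_def by (simp add: cm_sum_right cm_sm_right)
qed

lemma opoly_cmF: "cm k (Ff k) (opoly k p Y) = opoly k p (cm k (Ff k) Y)"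
proof -
  have "cm k (Ff k) ((Psi k ^^ r) Y) = (Psi k ^^ r) (cm k (Ff k) Y)" for r
    by (induction r) (simp_all add: Psi_F)
  then show ?thesis unfolding opoly_def by (simp add: cm_sum_right cm_sm_right)
qed

lemma Psip_Sm: "Y \<in> Sm k m \<Longrightarrow> (Psi k ^^ r) Y \<in> Sm k m"
  by (induction r) (simp_all add: Sm_Psi)

lemma opoly_Sm: "Y \<in> Sm k m \<Longrightarrow> opoly k p Y \<in> Sm k m"
  unfolding opoly_def by (intro Sm_sum Sm_sm Psip_Sm)

lemma Psip_supp: "supp k Y \<Longrightarrow> supp k ((Psi k ^^ r) Y)"
  by (induction r) (simp_all add: supp_Psi)

lemma opoly_supp: "supp k Y \<Longrightarrow> supp k (opoly k p Y)"
  unfolding opoly_def by (intro supp_sum supp_sm Psip_supp)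

definition mu :: "nat \<Rightarrow> complex" where
  "mu i = of_nat (i * (i + 1))"

definition PP :: "nat \<Rightarrow> nat \<Rightarrow> complex poly" where
  "PP j m = (\<Prod>i\<in>{j..m}. [:- mu i, 1:])"

lemma PP_step: "n \<le> m \<Longrightarrow> PP n m = [:- mu n, 1:] * PP (Suc n) m"
proof -
  assume "n \<le> m"
  then have "{n..m} = insert n {Suc n..m}" by auto
  then show ?thesis unfolding PP_def by simp
qed

lemma PP_empty: "PP (Suc m) m = 1"
  unfolding PP_def by simp

lemma key_pos: assumes "j \<le> Suc m"
  shows "Y \<in> Sm k m \<Longrightarrow> band (int j) Y = Y \<Longrightarrow> opoly k (PP j m) Y = 0"
  using assms
proof (induction j arbitrary: Y rule: inc_induct)
  case base
  have "band (int (Suc m)) Y = 0" by (rule Sm_band_zero[OF base(1)]) simp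
  then have "Y = 0" using base(2) by simp
  then show ?case by (simp add: PP_empty opoly_one)
next
  case (step n)
  define Z where "Z = opoly k (PP (Suc n) m) Y"
  have cE: "cm k (Ee k) Y \<in> Sm k m" using step.prems(1) by (intro Sm_cm) auto
  have bE: "band (int (Suc n)) (cm k (Ee k) Y) = cm k (Ee k) Y"
    using step.prems(2) by (simp add: band_cm_E)
  have c1: "cm k (Ee k) Z = 0"
    unfolding Z_def opoly_cmE using step.IH[OF cE bE] .
  have bZ: "band (int n) Z = Z" unfolding Z_def opoly_band step.prems(2) ..
  have sZ: "supp k Z" unfolding Z_def by (intro opoly_supp Sm_supp[OF step.prems(1)])
  have c2: "cm k (Hh k) Z = sm (2 * of_int (int n)) Z" by (rule H_weight[OF sZ bZ])
  have "Psi k Z = cm k (Ff k) 0 + sm (1/2) (sm (2 * of_int (int n)) Z) + sm (1/4) (sm (2 * of_int (int n)) (sm (2 * of_int (int n)) Z))"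
    unfolding Psi_def c1 c2 cm_sm_right ..
  also have "\<dots> = sm (mu n) Z"
    by (simp add: cm_zero_right sm_sm) (simp add: fun_eq_iff fa sm_def mu_def algebra_simps)
  finally have "Psi k Z = sm (mu n) Z" .
  then have "opoly k [:- mu n, 1:] Z = 0" by (simp add: opoly_lin)
  moreover have nm: "n \<le> m" using step.hyps by simp
  ultimately show ?case unfolding Z_def by (subst PP_step[OF nm]) (simp only: opoly_mult)
qed

lemma key_neg: assumes "j \<le> Suc m"
  shows "Y \<in> Sm k m \<Longrightarrow> band (- int j) Y = Y \<Longrightarrow> opoly k (PP j m) Y = 0"
  using assms
proof (induction j arbitrary: Y rule: inc_induct)
  case base
  have "band (- int (Suc m)) Y = 0" by (rule Sm_band_zero[OF base(1)]) simp
  then have "Y = 0" using base(2) by simp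
  then show ?case by (simp add: PP_empty opoly_one)
next
  case (step n)
  define Z where "Z = opoly k (PP (Suc n) m) Y"
  have cF: "cm k (Ff k) Y \<in> Sm k m" using step.prems(1) by (intro Sm_cm) auto
  have bF: "band (- int (Suc n)) (cm k (Ff k) Y) = cm k (Ff k) Y"
  proof -
    have "- int (Suc n) + 1 = - int n" by simp
    then show ?thesis using step.prems(2) by (simp add: band_cm_F)
  qed
  have c1: "cm k (Ff k) Z = 0"
    unfolding Z_def opoly_cmF using step.IH[OF cF bF] .
  have bZ: "band (- int n) Z = Z" unfolding Z_def opoly_band step.prems(2) ..
  have sZ: "supp k Z" unfolding Z_def by (intro opoly_supp Sm_supp[OF step.prems(1)])
  have c2: "cm k (Hh k) Z = sm (2 * of_int (- int n)) Z" by (rule H_weight[OF sZ bZ])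
  have "Psi k Z = cm k (Ee k) 0 - sm (1/2) (sm (2 * of_int (- int n)) Z) + sm (1/4) (sm (2 * of_int (- int n)) (sm (2 * of_int (- int n)) Z))"
    unfolding Psi_alt c1 c2 cm_sm_right ..
  also have "\<dots> = sm (mu n) Z"
    by (simp add: cm_zero_right sm_sm) (simp add: fun_eq_iff fa sm_def mu_def algebra_simps)
  finally have "Psi k Z = sm (mu n) Z" .
  then have "opoly k [:- mu n, 1:] Z = 0" by (simp add: opoly_lin)
  moreover have nm: "n \<le> m" using step.hyps by simp
  ultimately show ?case unfolding Z_def by (subst PP_step[OF nm]) (simp only: opoly_mult)
qed

lemma PP_split: assumes "n \<le> Suc m" shows "PP 0 m = (\<Prod>i\<in>{0..<n}. [:- mu i, 1:]) * PP n m"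
proof -
  have "{0..m} = {0..<n} \<union> {n..m}" using assms by auto
  then show ?thesis unfolding PP_def by (subst prod.union_disjoint[symmetric]) auto
qed

lemma key: assumes "Y \<in> Sm k m" shows "opoly k (PP 0 m) Y = 0"
proof -
  have Y: "Y = (\<Sum>j\<in>{- int m..int m}. band j Y)"
    by (rule band_decomp) (rule Sm_band_zero[OF assms])
  have "opoly k (PP 0 m) (band j Y) = 0" if j: "j \<in> {- int m..int m}" for j
  proof (cases "0 \<le> j")
    case True
    define n where "n = nat j"
    have n: "j = int n" "n \<le> Suc m" using True j unfolding n_def by auto
    have "opoly k (PP 0 m) (band j Y) = opoly k (\<Prod>i\<in>{0..<n}. [:- mu i, 1:]) (opoly k (PP n m) (band j Y))"
      by (simp add: PP_split[OF n(2)] opoly_mult)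
    also have "opoly k (PP n m) (band j Y) = 0"
      using n by (intro key_pos Sm_band assms) (auto simp: band_band_same)
    finally show ?thesis by (simp add: opoly_lin_zero)
  next
    case False
    define n where "n = nat (- j)"
    have n: "j = - int n" "n \<le> Suc m" using False j unfolding n_def by auto
    have "opoly k (PP 0 m) (band j Y) = opoly k (\<Prod>i\<in>{0..<n}. [:- mu i, 1:]) (opoly k (PP n m) (band j Y))"
      by (simp add: PP_split[OF n(2)] opoly_mult)
    also have "opoly k (PP n m) (band j Y) = 0"
      using n by (intro key_neg Sm_band assms) (auto simp: band_band_same)
    finally show ?thesis by (simp add: opoly_lin_zero)
  qed
  then show ?thesis by (subst Y) (simp add: opoly_lin_sum)
qed

lemma mu_inj: "mu i = mu j \<Longrightarrow> i = j"
proof -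
  assume "mu i = mu j"
  then have "i * (i + 1) = j * (j + 1)" unfolding mu_def by (simp only: of_nat_eq_iff)
  moreover have "strict_mono (\<lambda>i::nat. i * (i + 1))"
  proof (rule strict_monoI)
    fix x y :: nat assume "x < y" then show "x * (x + 1) < y * (y + 1)" by (intro mult_strict_mono) auto
  qed
  ultimately show "i = j" by (metis strict_mono_eq)
qed

definition lag :: "nat \<Rightarrow> nat \<Rightarrow> complex poly" where
  "lag m i = smult (1 / (\<Prod>j\<in>{0..m} - {i}. (mu i - mu j))) (\<Prod>j\<in>{0..m} - {i}. [:- mu j, 1:])"

lemma lag_degree: assumes "i \<le> m" shows "degree (lag m i) \<le> m"
proof -
  have "degree (\<Prod>j\<in>{0..m} - {i}. [:- mu j, 1:]) \<le> (\<Sum>j\<in>{0..m} - {i}. 1)"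
    using degree_prod_sum_le[of "{0..m} - {i}" "\<lambda>j. [:- mu j, 1:]"] by (simp add: o_def)
  also have "\<dots> \<le> m" using assms by (auto simp: card_Diff_singleton)
  finally show ?thesis unfolding lag_def using degree_smult_le le_trans by blast
qed

lemma poly_lag: assumes "i \<le> m" "t \<le> m" shows "poly (lag m i) (mu t) = (if t = i then 1 else 0)"
proof (cases "t = i")
  case True
  have "(\<Prod>j\<in>{0..m} - {i}. (mu i - mu j)) \<noteq> 0"
    by (subst prod_zero_iff) (auto dest: mu_inj)
  then show ?thesis using True unfolding lag_def by (simp add: poly_prod)
next
  case False
  then have "t \<in> {0..m} - {i}" using assms by auto
  then have "(\<Prod>j\<in>{0..m} - {i}. poly [:- mu j, 1:] (mu t)) = 0"
    by (intro prod_zero) auto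
  then show ?thesis using False unfolding lag_def by (simp add: poly_prod)
qed

lemma lag_sum: "(\<Sum>i\<in>{0..m}. lag m i) = 1"
proof (rule poly_eqI_degree[where A = "mu ` {0..m}"])
  fix x assume "x \<in> mu ` {0..m}"
  then obtain t where t: "t \<le> m" "x = mu t" by auto
  have "poly (\<Sum>i\<in>{0..m}. lag m i) x = (\<Sum>i\<in>{0..m}. (if t = i then 1 else 0))"
    unfolding poly_sum t(2) by (intro sum.cong) (auto simp: poly_lag t(1))
  also have "\<dots> = 1" using t(1) by simp
  finally show "poly (\<Sum>i\<in>{0..m}. lag m i) x = poly 1 x" by simp
next
  have "card (mu ` {0..m}) = Suc m"
    by (subst card_image) (auto intro: inj_onI mu_inj)
  moreover have "degree (\<Sum>i\<in>{0..m}. lag m i) \<le> m"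
    by (intro degree_sum_le lag_degree) auto
  ultimately show "degree (\<Sum>i\<in>{0..m}. lag m i) < card (mu ` {0..m})" "degree (1::complex poly) < card (mu ` {0..m})"
    by auto
qed

lemma lag_mult: assumes "i \<le> m"
  shows "[:- mu i, 1:] * lag m i = smult (1 / (\<Prod>j\<in>{0..m} - {i}. (mu i - mu j))) (PP 0 m)"
proof -
  have "PP 0 m = [:- mu i, 1:] * (\<Prod>j\<in>{0..m} - {i}. [:- mu j, 1:])"
    unfolding PP_def using assms by (subst prod.remove[of _ i]) auto
  then show ?thesis unfolding lag_def by (simp add: mult_smult_right)
qed

lemma eig: assumes "Y \<in> Sm k m" "i \<le> m"
  shows "Psi k (opoly k (lag m i) Y) = sm (mu i) (opoly k (lag m i) Y)"
proof -
  have "opoly k [:- mu i, 1:] (opoly k (lag m i) Y) = opoly k ([:- mu i, 1:] * lag m i) Y"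
    by (rule opoly_mult[symmetric])
  also have "\<dots> = 0" unfolding lag_mult[OF assms(2)] by (simp add: opoly_smult key[OF assms(1)])
  finally show ?thesis unfolding opoly_lin by (simp add: fun_eq_iff fa)
qed

lemma decomp: "Y = (\<Sum>i\<in>{0..m}. opoly k (lag m i) Y)"
  by (simp add: opoly_sum_poly[symmetric] lag_sum opoly_one)

lemma Phi_add: "Phi k (A + B) = Phi k A + Phi k B"
  unfolding Phi_def by (simp add: mmul_lin sum.distrib)
lemma Phi_sm: "Phi k (sm a A) = sm a (Phi k A)"
  unfolding Phi_def by (simp add: mmul_lin sm_sum)
lemma Phi_zero: "Phi k 0 = 0"
  unfolding Phi_def by (simp add: mmul_lin)
lemma Phi_sum: "Phi k (\<Sum>x\<in>S. f x) = (\<Sum>x\<in>S. Phi k (f x))"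
  by (induction S rule: infinite_finite_induct) (simp_all add: Phi_zero Phi_add)
lemma Phip_add: "(Phi k ^^ r) (A + B) = (Phi k ^^ r) A + (Phi k ^^ r) B"
  by (induction r) (simp_all add: Phi_add)
lemma Phip_sm: "(Phi k ^^ r) (sm a A) = sm a ((Phi k ^^ r) A)"
  by (induction r) (simp_all add: Phi_sm)
lemma Phip_zero: "(Phi k ^^ r) 0 = 0"
  by (induction r) (simp_all add: Phi_zero)
lemma Phip_sum: "(Phi k ^^ r) (\<Sum>x\<in>S. f x) = (\<Sum>x\<in>S. (Phi k ^^ r) (f x))"
  by (induction S rule: infinite_finite_induct) (simp_all add: Phip_zero Phip_add)
lemma Phip_supp: "supp k Y \<Longrightarrow> supp k ((Phi k ^^ r) Y)"
  by (induction r) (simp_all add: supp_Phi)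

lemma Phip_eig: assumes "supp k Z" "Psi k Z = sm a Z"
  shows "(Phi k ^^ n) Z = sm ((cc k - a / 2) ^ n) Z"
proof (induction n)
  case 0 then show ?case by simp
next
  case (Suc n)
  have "(Phi k ^^ Suc n) Z = sm ((cc k - a / 2) ^ n) (Phi k Z)"
    by (simp add: Suc Phi_sm)
  also have "Phi k Z = sm (cc k - a / 2) Z"
    unfolding Phi_Psi[OF assms(1)] assms(2) by (simp add: fun_eq_iff fa sm_def algebra_simps)
  finally show ?case by (simp add: sm_sm mult.commute)
qed

lemma Phip_decomp: assumes "Y \<in> Sm k m"
  shows "(Phi k ^^ n) Y = (\<Sum>i\<in>{0..m}. sm ((cc k - mu i / 2) ^ n) (opoly k (lag m i) Y))"
proof -
  have "(Phi k ^^ n) Y = (\<Sum>i\<in>{0..m}. (Phi k ^^ n) (opoly k (lag m i) Y))"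
    by (subst decomp[where m = m and k = k]) (simp add: Phip_sum)
  also have "\<dots> = (\<Sum>i\<in>{0..m}. sm ((cc k - mu i / 2) ^ n) (opoly k (lag m i) Y))"
    by (intro sum.cong refl Phip_eig eig assms opoly_supp Sm_supp[OF assms]) auto
  finally show ?thesis .
qed

lemma sum_PiE_insert:
  assumes "x \<notin> S"
  shows "(\<Sum>\<sigma>\<in>PiE (insert x S) T. f \<sigma>) = (\<Sum>b\<in>T x. \<Sum>\<sigma>\<in>PiE S T. f (\<sigma>(x := b)))"
proof -
  have "(\<Sum>\<sigma>\<in>PiE (insert x S) T. f \<sigma>) = (\<Sum>p\<in>T x \<times> PiE S T. f ((\<lambda>(y, g). g(x := y)) p))"
    unfolding PiE_insert_eq by (subst sum.reindex) (auto intro: inj_combinator[OF assms])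
  also have "\<dots> = (\<Sum>(b,\<sigma>)\<in>T x \<times> PiE S T. f (\<sigma>(x := b)))"
    by (intro sum.cong) auto
  also have "\<dots> = (\<Sum>b\<in>T x. \<Sum>\<sigma>\<in>PiE S T. f (\<sigma>(x := b)))"
    by (rule sum.cartesian_product[symmetric])
  finally show ?thesis .
qed

definition merge :: "'a set \<Rightarrow> ('a \<Rightarrow> 'b) \<Rightarrow> ('a \<Rightarrow> 'b) \<Rightarrow> 'a \<Rightarrow> 'b" where
  "merge X \<alpha> \<beta> = (\<lambda>i. if i \<in> X then \<alpha> i else \<beta> i)"

lemma merge_restrict: "\<sigma> \<in> PiE (X \<union> Y) T \<Longrightarrow> merge X (restrict \<sigma> X) (restrict \<sigma> Y) = \<sigma>"
  by (auto simp: merge_def restrict_def fun_eq_iff PiE_def extensional_def)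

lemma sum_PiE_union:
  assumes "X \<inter> Y = {}"
  shows "(\<Sum>\<sigma>\<in>PiE (X \<union> Y) T. f \<sigma>) = (\<Sum>\<alpha>\<in>PiE X T. \<Sum>\<beta>\<in>PiE Y T. f (merge X \<alpha> \<beta>))"
proof -
  have "(\<Sum>\<sigma>\<in>PiE (X \<union> Y) T. f \<sigma>) = (\<Sum>p\<in>PiE X T \<times> PiE Y T. f (merge X (fst p) (snd p)))"
  proof (rule sum.reindex_bij_witness[where i = "\<lambda>p. merge X (fst p) (snd p)" and j = "\<lambda>\<sigma>. (restrict \<sigma> X, restrict \<sigma> Y)"])
    fix p assume p: "p \<in> PiE X T \<times> PiE Y T"
    show "(restrict (merge X (fst p) (snd p)) X, restrict (merge X (fst p) (snd p)) Y) = p"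
      using p assms by (cases p) (auto simp: merge_def restrict_def fun_eq_iff PiE_def extensional_def)
    show "merge X (fst p) (snd p) \<in> PiE (X \<union> Y) T"
      using p by (cases p) (auto simp: merge_def PiE_def extensional_def)
  next
    fix \<sigma> assume s: "\<sigma> \<in> PiE (X \<union> Y) T"
    show "merge X (fst (restrict \<sigma> X, restrict \<sigma> Y)) (snd (restrict \<sigma> X, restrict \<sigma> Y)) = \<sigma>"
      using s by (simp add: merge_restrict)
    show "(restrict \<sigma> X, restrict \<sigma> Y) \<in> PiE X T \<times> PiE Y T"
      using s by auto
  qed (simp add: merge_restrict)
  also have "\<dots> = (\<Sum>(\<alpha>,\<beta>)\<in>PiE X T \<times> PiE Y T. f (merge X \<alpha> \<beta>))"
    by (intro sum.cong) auto
  also have "\<dots> = (\<Sum>\<alpha>\<in>PiE X T. \<Sum>\<beta>\<in>PiE Y T. f (merge X \<alpha> \<beta>))"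
    by (rule sum.cartesian_product[symmetric])
  finally show ?thesis .
qed

lemma distinct_nth_notin_take: "distinct zs \<Longrightarrow> p < length zs \<Longrightarrow> zs ! p \<notin> set (take p zs)"
  by (metis distinct_take distinct_append id_take_nth_drop in_set_dropD list.set_intros(1) not_distinct_conv_prefix)

lemma word_letters:
  assumes "distinct zs" "set ts \<subseteq> set zs"
  shows "map (\<lambda>p. if (zs @ ts) ! p \<in> set (take p (zs @ ts)) then D ((zs @ ts) ! p) else G ((zs @ ts) ! p))
           [0..<length (zs @ ts)] = map G zs @ map D ts"
proof (rule nth_equalityI)
  fix p assume "p < length (map (\<lambda>p. if (zs @ ts) ! p \<in> set (take p (zs @ ts)) then D ((zs @ ts) ! p) else G ((zs @ ts) ! p))
           [0..<length (zs @ ts)])"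
  then have p: "p < length zs + length ts" by simp
  show "map (\<lambda>p. if (zs @ ts) ! p \<in> set (take p (zs @ ts)) then D ((zs @ ts) ! p) else G ((zs @ ts) ! p))
           [0..<length (zs @ ts)] ! p = (map G zs @ map D ts) ! p"
  proof (cases "p < length zs")
    case True
    then show ?thesis using distinct_nth_notin_take[OF assms(1) True] p by (simp add: nth_append)
  next
    case False
    then have "ts ! (p - length zs) \<in> set zs" using p assms(2) by (auto simp: nth_mem subsetD)
    moreover have "set zs \<subseteq> set (take p (zs @ ts))" using False by auto
    ultimately show ?thesis using False p by (auto simp: nth_append)
  qed
qed simp

definition Aw :: "nat \<Rightarrow> (nat \<Rightarrow> nat) \<Rightarrow> nat list \<Rightarrow> mat" where
  "Aw k \<alpha> xs = prodlist k (map (\<lambda>x. gen k (\<alpha> x)) xs)"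
definition Asw :: "nat \<Rightarrow> (nat \<Rightarrow> nat) \<Rightarrow> nat list \<Rightarrow> mat" where
  "Asw k \<alpha> xs = prodlist k (map (\<lambda>x. dualgen k (\<alpha> x)) (rev xs))"

lemma supp_Aw: "supp k (Aw k \<alpha> xs)"
  unfolding Aw_def by (intro supp_prodlist) (auto intro: supp_gen)
lemma supp_Asw: "supp k (Asw k \<alpha> xs)"
  unfolding Asw_def by (intro supp_prodlist) (auto intro: supp_dualgen)

lemma Aw_cong: "(\<And>x. x \<in> set xs \<Longrightarrow> \<alpha> x = \<beta> x) \<Longrightarrow> Aw k \<alpha> xs = Aw k \<beta> xs"
  unfolding Aw_def by (metis (mono_tags, lifting) map_eq_conv)
lemma Asw_cong: "(\<And>x. x \<in> set xs \<Longrightarrow> \<alpha> x = \<beta> x) \<Longrightarrow> Asw k \<alpha> xs = Asw k \<beta> xs"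
  unfolding Asw_def by (metis (mono_tags, lifting) map_eq_conv set_rev)

lemma Aw_Cons: "Aw k \<alpha> (x # xs) = mm k (gen k (\<alpha> x)) (Aw k \<alpha> xs)"
  unfolding Aw_def by simp
lemma Asw_Cons: "Asw k \<alpha> (x # xs) = mm k (Asw k \<alpha> xs) (dualgen k (\<alpha> x))"
proof -
  have "Asw k \<alpha> (x # xs) = mm k (Asw k \<alpha> xs) (prodlist k [dualgen k (\<alpha> x)])"
    unfolding Asw_def by (simp only: rev.simps map_append list.map, rule prodlist_append) (auto simp: supp_dualgen)
  also have "prodlist k [dualgen k (\<alpha> x)] = dualgen k (\<alpha> x)" by (simp add: mid_right supp_dualgen)
  finally show ?thesis .
qed

abbreviation T3 :: "nat \<Rightarrow> nat set" where "T3 \<equiv> (\<lambda>_. {0, 1, 2})"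

lemma three: "{0, 1, 2::nat} = {..<3}" by auto

lemma nest: assumes "distinct ys" "supp k Y"
  shows "(\<Sum>\<beta>\<in>PiE (set ys) T3. mm k (Aw k \<beta> ys) (mm k Y (Asw k \<beta> ys))) = (Phi k ^^ length ys) Y"
  using assms(1)
proof (induction ys)
  case Nil
  then show ?case by (simp add: Aw_def Asw_def mid_left mid_right assms(2) supp_intros)
next
  case (Cons y ys)
  have yn: "y \<notin> set ys" using Cons.prems by simp
  have "(\<Sum>\<beta>\<in>PiE (set (y # ys)) T3. mm k (Aw k \<beta> (y # ys)) (mm k Y (Asw k \<beta> (y # ys))))
      = (\<Sum>b\<in>{0, 1, 2}. \<Sum>\<beta>\<in>PiE (set ys) T3. mm k (Aw k (\<beta>(y := b)) (y # ys)) (mm k Y (Asw k (\<beta>(y := b)) (y # ys))))"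
    by (simp add: sum_PiE_insert[OF yn])
  also have "\<dots> = (\<Sum>b\<in>{0, 1, 2}. \<Sum>\<beta>\<in>PiE (set ys) T3. mm k (gen k b) (mm k (mm k (Aw k \<beta> ys) (mm k Y (Asw k \<beta> ys))) (dualgen k b)))"
  proof (intro sum.cong refl)
    fix b \<beta>
    have "Aw k (\<beta>(y := b)) ys = Aw k \<beta> ys" using yn by (intro Aw_cong) auto
    moreover have "Asw k (\<beta>(y := b)) ys = Asw k \<beta> ys" using yn by (intro Asw_cong) auto
    ultimately show "mm k (Aw k (\<beta>(y := b)) (y # ys)) (mm k Y (Asw k (\<beta>(y := b)) (y # ys)))
        = mm k (gen k b) (mm k (mm k (Aw k \<beta> ys) (mm k Y (Asw k \<beta> ys))) (dualgen k b))"
      by (simp add: Aw_Cons Asw_Cons mmul_assoc)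
  qed
  also have "\<dots> = (\<Sum>b\<in>{0, 1, 2}. mm k (gen k b) (mm k (\<Sum>\<beta>\<in>PiE (set ys) T3. mm k (Aw k \<beta> ys) (mm k Y (Asw k \<beta> ys))) (dualgen k b)))"
    by (simp add: mmul_sum_left mmul_sum_right)
  also have "\<dots> = Phi k ((Phi k ^^ length ys) Y)"
    unfolding Cons.IH[OF distinct.simps(2)[THEN iffD1, OF Cons.prems, THEN conjunct2]]
    by (simp only: Phi_def[of k "(Phi k ^^ length ys) Y"] three)
  finally show ?case by simp
qed

lemma prodlist_append2: "\<forall>M\<in>set Ns. supp k M \<Longrightarrow> prodlist k (Ms @ Ns) = mm k (prodlist k Ms) (prodlist k Ns)"
  by (rule prodlist_append) auto

lemma Kmn_split: "Kmn m n = [0..<m+n] @ (rev [0..<m] @ rev [m..<m+n])"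
  unfolding Kmn_def by (simp add: upt_add_eq_append[symmetric])

lemma set_Kmn: "set (Kmn m n) = {0..<m+n}"
  unfolding Kmn_def by auto

lemma foldr_prodlist: "foldr (\<lambda>p M. mmul (k + 1) (X p) M) xs (mid (k + 1)) = prodlist k (map X xs)"
  unfolding prodlist_def by (induction xs) auto

lemma ws_rep_Kmn: "ws_rep k (Kmn m n) = (\<Sum>\<sigma>\<in>PiE {0..<m+n} T3.
    prodlist k (map (\<lambda>x. gen k (\<sigma> x)) [0..<m+n] @ map (\<lambda>x. dualgen k (\<sigma> x)) (rev [0..<m] @ rev [m..<m+n])))"
proof -
  have "foldr (\<lambda>p M. mmul (k + 1) (if Kmn m n ! p \<in> set (take p (Kmn m n)) then dualgen k (\<sigma> (Kmn m n ! p))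
          else gen k (\<sigma> (Kmn m n ! p))) M) [0..<length (Kmn m n)] (mid (k + 1))
     = prodlist k (map (\<lambda>x. gen k (\<sigma> x)) [0..<m+n] @ map (\<lambda>x. dualgen k (\<sigma> x)) (rev [0..<m] @ rev [m..<m+n]))"
    for \<sigma>
    unfolding foldr_prodlist Kmn_split
    by (subst word_letters) auto
  then show ?thesis unfolding ws_rep_def set_Kmn
    by (simp add: fun_eq_iff sum_mat_apply)
qed

lemma ws_rep_U: "ws_rep k (Kmn m n) = (\<Sum>\<alpha>\<in>PiE {0..<m} T3. mm k (Aw k \<alpha> [0..<m]) ((Phi k ^^ n) (Asw k \<alpha> [0..<m])))"
proof -
  have split: "prodlist k (map (\<lambda>x. gen k (\<sigma> x)) [0..<m+n] @ map (\<lambda>x. dualgen k (\<sigma> x)) (rev [0..<m] @ rev [m..<m+n]))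
    = mm k (Aw k \<sigma> [0..<m]) (mm k (Aw k \<sigma> [m..<m+n]) (mm k (Asw k \<sigma> [0..<m]) (Asw k \<sigma> [m..<m+n])))" for \<sigma>
    unfolding Aw_def Asw_def upt_add_eq_append[OF le0, of m n] map_append append_assoc
    apply (subst prodlist_append2, force simp: supp_gen supp_dualgen)+
    apply (rule refl)
    done
  have "ws_rep k (Kmn m n) = (\<Sum>\<sigma>\<in>PiE ({0..<m} \<union> {m..<m+n}) T3.
      mm k (Aw k \<sigma> [0..<m]) (mm k (Aw k \<sigma> [m..<m+n]) (mm k (Asw k \<sigma> [0..<m]) (Asw k \<sigma> [m..<m+n]))))"
  proof -
    have u: "{0..<m} \<union> {m..<m+n} = {0..<m+n::nat}" by auto
    show ?thesis unfolding ws_rep_Kmn split u ..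
  qed
  also have "\<dots> = (\<Sum>\<alpha>\<in>PiE {0..<m} T3. \<Sum>\<beta>\<in>PiE {m..<m+n} T3.
      mm k (Aw k \<alpha> [0..<m]) (mm k (Aw k \<beta> [m..<m+n]) (mm k (Asw k \<alpha> [0..<m]) (Asw k \<beta> [m..<m+n]))))"
  proof (subst sum_PiE_union, simp, intro sum.cong refl)
    fix \<alpha> \<beta>
    have "Aw k (merge {0..<m} \<alpha> \<beta>) [0..<m] = Aw k \<alpha> [0..<m]" by (intro Aw_cong) (auto simp: merge_def)
    moreover have "Asw k (merge {0..<m} \<alpha> \<beta>) [0..<m] = Asw k \<alpha> [0..<m]" by (intro Asw_cong) (auto simp: merge_def)
    moreover have "Aw k (merge {0..<m} \<alpha> \<beta>) [m..<m+n] = Aw k \<beta> [m..<m+n]" by (intro Aw_cong) (auto simp: merge_def)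
    moreover have "Asw k (merge {0..<m} \<alpha> \<beta>) [m..<m+n] = Asw k \<beta> [m..<m+n]" by (intro Asw_cong) (auto simp: merge_def)
    ultimately show "mm k (Aw k (merge {0..<m} \<alpha> \<beta>) [0..<m]) (mm k (Aw k (merge {0..<m} \<alpha> \<beta>) [m..<m + n])
          (mm k (Asw k (merge {0..<m} \<alpha> \<beta>) [0..<m]) (Asw k (merge {0..<m} \<alpha> \<beta>) [m..<m + n]))) =
         mm k (Aw k \<alpha> [0..<m]) (mm k (Aw k \<beta> [m..<m + n]) (mm k (Asw k \<alpha> [0..<m]) (Asw k \<beta> [m..<m + n])))"
      by simp
  qed
  also have "\<dots> = (\<Sum>\<alpha>\<in>PiE {0..<m} T3. mm k (Aw k \<alpha> [0..<m]) ((Phi k ^^ n) (Asw k \<alpha> [0..<m])))"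
  proof (intro sum.cong refl)
    fix \<alpha>
    have "(\<Sum>\<beta>\<in>PiE (set [m..<m+n]) T3. mm k (Aw k \<beta> [m..<m+n]) (mm k (Asw k \<alpha> [0..<m]) (Asw k \<beta> [m..<m+n])))
        = (Phi k ^^ length [m..<m+n]) (Asw k \<alpha> [0..<m])"
      by (rule nest) (auto simp: supp_Asw)
    then show "(\<Sum>\<beta>\<in>PiE {m..<m+n} T3. mm k (Aw k \<alpha> [0..<m]) (mm k (Aw k \<beta> [m..<m+n]) (mm k (Asw k \<alpha> [0..<m]) (Asw k \<beta> [m..<m+n]))))
        = mm k (Aw k \<alpha> [0..<m]) ((Phi k ^^ n) (Asw k \<alpha> [0..<m]))"
      by (simp add: mmul_sum_right[symmetric])
  qed
  finally show ?thesis .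
qed

definition bil :: "(mat \<Rightarrow> mat \<Rightarrow> mat) \<Rightarrow> bool" where
  "bil \<beta> \<longleftrightarrow> (\<forall>X X' Y. \<beta> (X + X') Y = \<beta> X Y + \<beta> X' Y) \<and> (\<forall>X Y Y'. \<beta> X (Y + Y') = \<beta> X Y + \<beta> X Y')
     \<and> (\<forall>a X Y. \<beta> (sm a X) Y = sm a (\<beta> X Y)) \<and> (\<forall>a X Y. \<beta> X (sm a Y) = sm a (\<beta> X Y))"

lemma bilD: assumes "bil \<beta>"
  shows "\<beta> (X + X') Y = \<beta> X Y + \<beta> X' Y" "\<beta> X (Y + Y') = \<beta> X Y + \<beta> X Y'"
    "\<beta> (sm a X) Y = sm a (\<beta> X Y)" "\<beta> X (sm a Y) = sm a (\<beta> X Y)"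
    "\<beta> 0 Y = 0" "\<beta> X 0 = 0"
proof -
  show "\<beta> (X + X') Y = \<beta> X Y + \<beta> X' Y" "\<beta> X (Y + Y') = \<beta> X Y + \<beta> X Y'"
    "\<beta> (sm a X) Y = sm a (\<beta> X Y)" "\<beta> X (sm a Y) = sm a (\<beta> X Y)"
    using assms unfolding bil_def by blast+
  have "\<beta> (sm 0 0) Y = sm 0 (\<beta> 0 Y)" using assms unfolding bil_def by blast
  then show "\<beta> 0 Y = 0" by simp
  have "\<beta> X (sm 0 0) = sm 0 (\<beta> X 0)" using assms unfolding bil_def by blast
  then show "\<beta> X 0 = 0" by simp
qed

lemma bil_sum_left: "bil \<beta> \<Longrightarrow> \<beta> (\<Sum>x\<in>S. f x) Y = (\<Sum>x\<in>S. \<beta> (f x) Y)"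
  by (induction S rule: infinite_finite_induct) (simp_all add: bilD)
lemma bil_sum_right: "bil \<beta> \<Longrightarrow> \<beta> Y (\<Sum>x\<in>S. f x) = (\<Sum>x\<in>S. \<beta> Y (f x))"
  by (induction S rule: infinite_finite_induct) (simp_all add: bilD)

lemma gen012: "gen k 0 = Ee k" "gen k (Suc 0) = Hh k" "gen k 2 = Ff k"
  unfolding gen_def by auto
lemma dual012: "dualgen k 0 = sm (1/2) (Ff k)" "dualgen k (Suc 0) = sm (1/4) (Hh k)" "dualgen k 2 = sm (1/2) (Ee k)"
  unfolding dualgen_def sm_def by (auto simp: fun_eq_iff)

lemma sum3: "(\<Sum>b<3. f b) = f 0 + f (Suc 0) + f 2"
  by (simp add: numeral_3_eq_3 numeral_2_eq_2 lessThan_Suc add.commute add.left_commute)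

lemma inv_E: assumes "bil \<beta>"
  shows "(\<Sum>b<3. \<beta> (mm k (cm k (Ee k) (gen k b)) P) (mm k Q (dualgen k b))
            + \<beta> (mm k (gen k b) P) (mm k Q (cm k (Ee k) (dualgen k b)))) = 0"
  unfolding sum3 gen012 dual012
  apply (simp only: cm_sm_right rels mmul_lin bilD[OF assms] sm_sm)
  apply (rule ext)+
  apply (simp only: fa sm_def)
  apply (simp add: algebra_simps)
  done

lemma inv_H: assumes "bil \<beta>"
  shows "(\<Sum>b<3. \<beta> (mm k (cm k (Hh k) (gen k b)) P) (mm k Q (dualgen k b))
            + \<beta> (mm k (gen k b) P) (mm k Q (cm k (Hh k) (dualgen k b)))) = 0"
  unfolding sum3 gen012 dual012
  apply (simp only: cm_sm_right rels mmul_lin bilD[OF assms] sm_sm)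
  apply (rule ext)+
  apply (simp only: fa sm_def)
  apply (simp add: algebra_simps)
  done

lemma Phi_H: "cm k (Hh k) (Phi k Y) = Phi k (cm k (Hh k) Y)"
  unfolding Phi_expand
  apply (simp only: cm_lin cm_mm rels mmul_lin sm_lin)
  apply (rule ext)+
  apply (simp only: fa sm_def)
  apply (simp add: algebra_simps)
  done

lemma central_aux:
  assumes inv: "\<And>\<beta> P Q. bil \<beta> \<Longrightarrow> (\<Sum>b<3. \<beta> (mm k (cm k X (gen k b)) P) (mm k Q (dualgen k b))
            + \<beta> (mm k (gen k b) P) (mm k Q (cm k X (dualgen k b)))) = 0"
    and sX: "supp k X"
  shows "distinct xs \<Longrightarrow> bil \<beta> \<Longrightarrow>
    (\<Sum>\<alpha>\<in>PiE (set xs) T3. \<beta> (cm k X (Aw k \<alpha> xs)) (Asw k \<alpha> xs) + \<beta> (Aw k \<alpha> xs) (cm k X (Asw k \<alpha> xs))) = 0"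
proof (induction xs arbitrary: \<beta>)
  case Nil
  then show ?case by (simp add: Aw_def Asw_def cm_mid sX bilD)
next
  case (Cons x xs)
  have xn: "x \<notin> set xs" using Cons.prems by simp
  define \<beta>' where "\<beta>' = (\<lambda>U V. \<Sum>b<3. \<beta> (mm k (gen k b) U) (mm k V (dualgen k b)))"
  have b': "bil \<beta>'" using Cons.prems(2) unfolding \<beta>'_def bil_def
    by (simp add: mmul_lin bilD sum.distrib sm_sum)
  have eq: "\<beta> (cm k X (Aw k (\<alpha>(x := b)) (x # xs))) (Asw k (\<alpha>(x := b)) (x # xs))
        + \<beta> (Aw k (\<alpha>(x := b)) (x # xs)) (cm k X (Asw k (\<alpha>(x := b)) (x # xs)))
      = (\<beta> (mm k (cm k X (gen k b)) (Aw k \<alpha> xs)) (mm k (Asw k \<alpha> xs) (dualgen k b))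
         + \<beta> (mm k (gen k b) (Aw k \<alpha> xs)) (mm k (Asw k \<alpha> xs) (cm k X (dualgen k b))))
        + (\<beta> (mm k (gen k b) (cm k X (Aw k \<alpha> xs))) (mm k (Asw k \<alpha> xs) (dualgen k b))
         + \<beta> (mm k (gen k b) (Aw k \<alpha> xs)) (mm k (cm k X (Asw k \<alpha> xs)) (dualgen k b)))" for \<alpha> b
  proof -
    have "Aw k (\<alpha>(x := b)) xs = Aw k \<alpha> xs" using xn by (intro Aw_cong) auto
    moreover have "Asw k (\<alpha>(x := b)) xs = Asw k \<alpha> xs" using xn by (intro Asw_cong) auto
    ultimately show ?thesis
      by (simp add: Aw_Cons Asw_Cons cm_mm bilD[OF Cons.prems(2)] algebra_simps)
  qed
  have "(\<Sum>\<alpha>\<in>PiE (set (x # xs)) T3. \<beta> (cm k X (Aw k \<alpha> (x # xs))) (Asw k \<alpha> (x # xs))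
          + \<beta> (Aw k \<alpha> (x # xs)) (cm k X (Asw k \<alpha> (x # xs))))
      = (\<Sum>b\<in>{..<3}. \<Sum>\<alpha>\<in>PiE (set xs) T3.
          (\<beta> (mm k (cm k X (gen k b)) (Aw k \<alpha> xs)) (mm k (Asw k \<alpha> xs) (dualgen k b))
         + \<beta> (mm k (gen k b) (Aw k \<alpha> xs)) (mm k (Asw k \<alpha> xs) (cm k X (dualgen k b))))
        + (\<beta> (mm k (gen k b) (cm k X (Aw k \<alpha> xs))) (mm k (Asw k \<alpha> xs) (dualgen k b))
         + \<beta> (mm k (gen k b) (Aw k \<alpha> xs)) (mm k (cm k X (Asw k \<alpha> xs)) (dualgen k b))))"
    by (simp only: set_simps sum_PiE_insert[OF xn] eq three)
  also have "\<dots> = (\<Sum>\<alpha>\<in>PiE (set xs) T3. \<Sum>b<3.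
          (\<beta> (mm k (cm k X (gen k b)) (Aw k \<alpha> xs)) (mm k (Asw k \<alpha> xs) (dualgen k b))
         + \<beta> (mm k (gen k b) (Aw k \<alpha> xs)) (mm k (Asw k \<alpha> xs) (cm k X (dualgen k b)))))
       + (\<Sum>\<alpha>\<in>PiE (set xs) T3. \<beta>' (cm k X (Aw k \<alpha> xs)) (Asw k \<alpha> xs) + \<beta>' (Aw k \<alpha> xs) (cm k X (Asw k \<alpha> xs)))"
    unfolding \<beta>'_def by (simp add: sum.distrib sum.swap[of _ "{..<3::nat}"])
  also have "\<dots> = 0"
    using Cons.IH[OF distinct.simps(2)[THEN iffD1, OF Cons.prems(1), THEN conjunct2] b']
    by (simp add: inv[OF Cons.prems(2)])
  finally show ?case .
qed

lemma Phip_E: "cm k (Ee k) ((Phi k ^^ n) Y) = (Phi k ^^ n) (cm k (Ee k) Y)"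
  by (induction n) (simp_all add: Phi_E)
lemma Phip_H: "cm k (Hh k) ((Phi k ^^ n) Y) = (Phi k ^^ n) (cm k (Hh k) Y)"
  by (induction n) (simp_all add: Phi_H)

lemma U_central:
  assumes X: "X = Ee k \<or> X = Hh k"
  shows "cm k X (ws_rep k (Kmn m n)) = 0"
proof -
  define \<beta> where "\<beta> = (\<lambda>U V. mm k U ((Phi k ^^ n) V))"
  have b: "bil \<beta>" unfolding \<beta>_def bil_def by (simp add: mmul_lin Phip_add Phip_sm)
  have PX: "cm k X ((Phi k ^^ n) Y) = (Phi k ^^ n) (cm k X Y)" for Y using X Phip_E Phip_H by auto
  have "cm k X (ws_rep k (Kmn m n)) = (\<Sum>\<alpha>\<in>PiE (set [0..<m]) T3. \<beta> (cm k X (Aw k \<alpha> [0..<m])) (Asw k \<alpha> [0..<m])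
      + \<beta> (Aw k \<alpha> [0..<m]) (cm k X (Asw k \<alpha> [0..<m])))"
    unfolding ws_rep_U \<beta>_def by (simp add: cm_sum_right cm_mm PX)
  also have "\<dots> = 0"
  proof (rule central_aux[OF _ _ _ b])
    show "supp k X" using X by (auto intro: supp_intros)
  next
    fix \<beta> P Q assume "bil \<beta>"
    then show "(\<Sum>b<3. \<beta> (mm k (cm k X (gen k b)) P) (mm k Q (dualgen k b))
            + \<beta> (mm k (gen k b) P) (mm k Q (cm k X (dualgen k b)))) = 0"
      using X inv_E inv_H by auto
  qed simp
  finally show ?thesis .
qed

lemma supp_ws_U: "supp k (ws_rep k (Kmn m n))"
  unfolding ws_rep_U by (intro supp_sum supp_mmul supp_Aw Phip_supp supp_Asw)

lemma scalar_U: "ws_rep k (Kmn m n) = sm (ws_rep k (Kmn m n) 0 0) (mid (Suc k))"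
proof -
  define U where "U = ws_rep k (Kmn m n)"
  have sU: "supp k U" unfolding U_def by (rule supp_ws_U)
  have cH: "cm k (Hh k) U = 0" unfolding U_def by (rule U_central) simp
  have cE: "cm k (Ee k) U = 0" unfolding U_def by (rule U_central) simp
  have diag: "U i j = 0" if "i \<noteq> j" for i j
  proof (cases "i \<le> k \<and> j \<le> k")
    case True
    have "(mm k (Hh k) U - mm k U (Hh k)) i j = 0" using cH unfolding cm_def by (simp add: fa)
    then have "(of_int (int k - 2 * int i) - of_int (int k - 2 * int j)) * U i j = 0"
      using True by (simp add: fa mmul_gens algebra_simps)
    moreover have "(of_int (int k - 2 * int i) - of_int (int k - 2 * int j) :: complex) \<noteq> 0"
      using that by simp
    ultimately show ?thesis by simp
  next
    case False
    then show ?thesis using sU unfolding supp_def by auto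
  qed
  have step: "U (Suc i) (Suc i) = U i i" if "i < k" for i
  proof -
    have "(mm k (Ee k) U - mm k U (Ee k)) i (Suc i) = 0" using cE unfolding cm_def by (simp add: fa)
    then have "of_nat (Suc i) * U (Suc i) (Suc i) - U i i * of_nat (Suc i) = 0"
      using that by (simp add: fa mmul_gens)
    then have "of_nat (Suc i) * (U (Suc i) (Suc i) - U i i) = 0" by (simp add: algebra_simps)
    then show ?thesis by (simp only: mult_eq_0_iff of_nat_eq_0_iff) simp
  qed
  have const: "U i i = U 0 0" if "i \<le> k" for i
    using that by (induction i) (auto simp: step)
  have "U = sm (U 0 0) (mid (Suc k))"
  proof (rule ext, rule ext)
    fix i j
    show "U i j = sm (U 0 0) (mid (Suc k)) i j"
      using diag[of i j] const[of i] sU unfolding supp_def sm_def mid_def by auto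
  qed
  then show ?thesis unfolding U_def .
qed

fun gp :: "(nat \<Rightarrow> complex) \<Rightarrow> (nat \<Rightarrow> complex) \<Rightarrow> (nat \<Rightarrow> complex) \<Rightarrow> nat list \<Rightarrow> nat \<Rightarrow> nat \<Rightarrow> complex" where
  "gp eC fC hC [] i j = (if i = j then 1 else 0)"
| "gp eC fC hC (b # W) i j = (if b = 0 then eC i * gp eC fC hC W (Suc i) j
     else if b = 1 then hC i * gp eC fC hC W i j
     else (if i = 0 then 0 else fC i * gp eC fC hC W (i - 1) j))"

definition gent :: "complex \<Rightarrow> nat list \<Rightarrow> nat \<Rightarrow> nat \<Rightarrow> complex" where
  "gent x = gp (\<lambda>i. of_nat (Suc i)) (\<lambda>i. x - of_nat (i - 1)) (\<lambda>i. x - 2 * of_nat i)"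

fun gpp :: "nat list \<Rightarrow> nat \<Rightarrow> nat \<Rightarrow> complex poly" where
  "gpp [] i j = (if i = j then 1 else 0)"
| "gpp (b # W) i j = (if b = 0 then smult (of_nat (Suc i)) (gpp W (Suc i) j)
     else if b = 1 then [:- 2 * of_nat i, 1:] * gpp W i j
     else (if i = 0 then 0 else [:- of_nat (i - 1), 1:] * gpp W (i - 1) j))"

lemma poly_gpp: "poly (gpp W i j) x = gent x W i j"
  unfolding gent_def by (induction W arbitrary: i) (auto simp: algebra_simps)

lemma gent_trunc: "k < i \<Longrightarrow> j \<le> k \<Longrightarrow> gent (of_nat k) W i j = 0"
proof (induction W arbitrary: i)
  case Nil then show ?case by (simp add: gent_def)
next
  case (Cons b W)
  show ?case
  proof (cases "b = 0 \<or> b = 1")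
    case True then show ?thesis using Cons by (auto simp: gent_def)
  next
    case False
    show ?thesis
    proof (cases "k < i - 1")
      case True then show ?thesis using Cons False by (simp add: gent_def)
    next
      case False2: False
      then have "i - 1 = k" using Cons.prems by simp
      then show ?thesis using False Cons.prems by (simp add: gent_def)
    qed
  qed
qed

lemma Lmat: "prodlist k (map (gen k) W) i j = (if i \<le> k \<and> j \<le> k then gent (of_nat k) W i j else 0)"
proof (induction W arbitrary: i)
  case Nil then show ?case by (simp add: gent_def mid_def)
next
  case (Cons b W)
  show ?case
  proof (cases "b = 0")
    case True
    then show ?thesis using Cons gent_trunc[of k "Suc i" j W]
      by (auto simp: gen_def mmul_E_left gent_def)
  next
    case False
    show ?thesis
    proof (cases "b = 1")
      case True
      then show ?thesis using Cons by (auto simp: gen_def mmul_H_left gent_def)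
    next
      case False2: False
      then show ?thesis using Cons False
        by (auto simp: gen_def mmul_F_left gent_def of_nat_diff)
    qed
  qed
qed

lemma gent_shift:
  "gent (of_nat k) W (Suc k + i) (Suc k + j)
     = gp (\<lambda>i. of_nat (k + 2 + i)) (\<lambda>i. - of_nat i) (\<lambda>i. of_nat k - 2 * of_nat (Suc k + i)) W i j"
proof (induction W arbitrary: i)
  case Nil then show ?case by (simp add: gent_def)
next
  case (Cons b W)
  show ?case
  proof (cases "b = 0 \<or> b = 1")
    case True then show ?thesis using Cons.IH[of "Suc i"] Cons.IH[of i] by (auto simp: gent_def)
  next
    case False
    show ?thesis
    proof (cases i)
      case 0 then show ?thesis using False by (simp add: gent_def)
    next
      case (Suc i')
      have "Suc k + i - 1 = Suc k + i'" using Suc by simp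
      then show ?thesis using Cons False Suc by (simp add: gent_def of_nat_diff)
    qed
  qed
qed

fun dd :: "(nat \<Rightarrow> complex) \<Rightarrow> (nat \<Rightarrow> complex) \<Rightarrow> nat \<Rightarrow> complex" where
  "dd eC eC' 0 = 1"
| "dd eC eC' (Suc i) = dd eC eC' i * eC i / eC' i"

lemma gp_sim:
  assumes edge: "\<And>i. eC' i * fC' (Suc i) = eC i * fC (Suc i)"
    and nz: "\<And>i. eC' i \<noteq> 0"
  shows "gp eC' fC' hC W i j * dd eC eC' j = dd eC eC' i * gp eC fC hC W i j"
proof (induction W arbitrary: i)
  case Nil then show ?case by simp
next
  case (Cons b W)
  show ?case
  proof (cases "b = 0")
    case True
    have "gp eC' fC' hC (b # W) i j * dd eC eC' j = eC' i * (gp eC' fC' hC W (Suc i) j * dd eC eC' j)"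
      using True by simp
    also have "\<dots> = eC' i * (dd eC eC' (Suc i) * gp eC fC hC W (Suc i) j)" by (simp add: Cons.IH)
    also have "\<dots> = dd eC eC' i * (eC i * gp eC fC hC W (Suc i) j)" using nz[of i] by simp
    finally show ?thesis using True by simp
  next
    case False
    show ?thesis
    proof (cases "b = 1")
      case True then show ?thesis using Cons by (simp add: algebra_simps)
    next
      case False2: False
      show ?thesis
      proof (cases i)
        case 0 then show ?thesis using False False2 by simp
      next
        case (Suc i')
        have "gp eC' fC' hC (b # W) i j * dd eC eC' j = fC' (Suc i') * (gp eC' fC' hC W i' j * dd eC eC' j)"
          using False False2 Suc by simp
        also have "\<dots> = fC' (Suc i') * (dd eC eC' i' * gp eC fC hC W i' j)" by (simp add: Cons.IH)
        also have "\<dots> = dd eC eC' (Suc i') * (fC (Suc i') * gp eC fC hC W i' j)"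
        proof -
          have "fC' (Suc i') = eC i' * fC (Suc i') / eC' i'" using edge[of i'] nz[of i']
            by (simp add: field_simps)
          then show ?thesis by simp
        qed
        finally show ?thesis using False False2 Suc by simp
      qed
    qed
  qed
qed

lemma gent_reflect: "gent (of_nat k) W (Suc k) (Suc k) = gent (- of_nat k - 2) W 0 0"
proof -
  define eC' :: "nat \<Rightarrow> complex" where "eC' = (\<lambda>i. of_nat (k + 2 + i))"
  define fC' :: "nat \<Rightarrow> complex" where "fC' = (\<lambda>i. - of_nat i)"
  define hC :: "nat \<Rightarrow> complex" where "hC = (\<lambda>i. (- of_nat k - 2) - 2 * of_nat i)"
  define eC :: "nat \<Rightarrow> complex" where "eC = (\<lambda>i. of_nat (Suc i))"
  define fC :: "nat \<Rightarrow> complex" where "fC = (\<lambda>i. (- of_nat k - 2) - of_nat (i - 1))"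
  have h: "(\<lambda>i. of_nat k - 2 * of_nat (Suc k + i)) = hC"
    unfolding hC_def by (rule ext) (simp add: algebra_simps)
  have e1: "gent (of_nat k) W (Suc k) (Suc k) = gp eC' fC' hC W 0 0"
    using gent_shift[of k W 0 0] unfolding eC'_def fC'_def h[symmetric] by simp
  have edge: "eC' i * fC' (Suc i) = eC i * fC (Suc i)" for i
    unfolding eC'_def fC'_def eC_def fC_def by (simp add: algebra_simps)
  have nz: "eC' i \<noteq> 0" for i
    unfolding eC'_def by (simp only: of_nat_eq_0_iff)
  have e2: "gp eC' fC' hC W 0 0 * dd eC eC' 0 = dd eC eC' 0 * gp eC fC hC W 0 0"
    by (rule gp_sim[where eC = eC and eC' = eC' and fC = fC and fC' = fC']) (fact edge, fact nz)
  have e3: "gent (- of_nat k - 2) W 0 0 = gp eC fC hC W 0 0"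
    unfolding gent_def eC_def fC_def hC_def by simp
  show ?thesis using e1 e2 e3 by simp
qed

lemma poly_eq_inf:
  fixes p q :: "complex poly"
  assumes "infinite A" "\<And>x. x \<in> A \<Longrightarrow> poly p x = poly q x"
  shows "p = q"
proof (rule ccontr)
  assume "p \<noteq> q"
  then have "finite {x. poly (p - q) x = 0}" by (intro poly_roots_finite) simp
  moreover have "A \<subseteq> {x. poly (p - q) x = 0}" using assms(2) by auto
  ultimately show False using assms(1) finite_subset by blast
qed

lemma inf_of_nat_ge: "infinite ((of_nat :: nat \<Rightarrow> complex) ` {j..})"
proof
  assume "finite ((of_nat :: nat \<Rightarrow> complex) ` {j..})"
  moreover have "inj_on (of_nat :: nat \<Rightarrow> complex) {j..}" by (intro inj_onI) simp
  ultimately have "finite {j::nat..}" using finite_imageD by blast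
  then obtain b where "\<forall>x\<in>{j..}. x \<le> b" using finite_nat_set_iff_bounded_le by blast
  then have "Suc (max j b) \<le> b" by (meson atLeast_iff le_SucI max.cobounded1)
  then show False by simp
qed

lemma sym_poly:
  fixes P :: "complex poly"
  assumes "\<And>x. poly P x = poly P (- 2 - x)"
  shows "\<exists>q. \<forall>x. poly P x = poly q (x / 2 + x^2 / 4)"
  using assms
proof (induction "degree P" arbitrary: P rule: less_induct)
  case less
  define C :: "complex poly" where "C = [:0, 1/2, 1/4:]"
  have polyC: "poly C x = x / 2 + x^2 / 4" for x
    unfolding C_def by (simp add: power2_eq_square algebra_simps)
  have Csym: "poly C (- 2 - x) = poly C x" for x
    unfolding polyC by (simp add: power2_eq_square field_simps)
  show ?case
  proof (cases "degree P = 0")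
    case True
    then obtain c where "P = [:c:]" by (metis degree_eq_zeroE)
    then show ?thesis by (intro exI[of _ "[:c:]"]) simp
  next
    case False
    define n where "n = degree P"
    define a where "a = lead_coeff P"
    have P0: "P \<noteq> 0" using False by auto
    then have a0: "a \<noteq> 0" unfolding a_def by simp
    have pc: "poly (pcompose P [:-2, -1:]) x = poly P x" for x
    proof -
      have "poly [:-2, -1:] x = - 2 - x" by simp
      then show ?thesis by (simp only: poly_pcompose less.prems[of x, symmetric])
    qed
    have "pcompose P [:-2, -1:] = P"
      by (rule poly_eq_poly_eq_iff[THEN iffD1]) (simp add: fun_eq_iff pc)
    then have "lead_coeff P = lead_coeff P * (-1) ^ n"
      using lead_coeff_comp[of "[:-2, -1:]" P] unfolding n_def by simp
    then have "(-1 :: complex) ^ n = 1" using a0 unfolding a_def by simp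
    then have "even n" by (metis neg_one_odd_power one_neq_neg_one)
    then obtain t where t: "n = 2 * t" by blast
    define R where "R = P - smult (a * 4 ^ t) (C ^ t)"
    have C0: "C \<noteq> 0" unfolding C_def by simp
    have degC: "degree C = 2" unfolding C_def by simp
    have degCt: "degree (C ^ t) = n" using degree_power_eq[OF C0, of t] degC t by simp
    have lcCt: "lead_coeff (C ^ t) = (1/4) ^ t" unfolding lead_coeff_power by (simp add: C_def)
    have coeffR: "coeff R n = 0"
    proof -
      have "coeff (C ^ t) n = (1/4) ^ t" using lcCt degCt by simp
      then have "coeff (smult (a * 4 ^ t) (C ^ t)) n = a"
        by (simp add: power_divide field_simps)
      then show ?thesis unfolding R_def a_def n_def by simp
    qed
    have degR: "degree R < degree P"
    proof -
      have le: "degree R \<le> n" unfolding R_def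
        by (intro degree_diff_le) (auto simp: n_def degCt intro: le_trans[OF degree_smult_le])
      show ?thesis
      proof (cases "R = 0")
        case True then show ?thesis using False by simp
      next
        case R0: False
        have "degree R \<noteq> n" using coeffR R0 by (metis leading_coeff_0_iff)
        then show ?thesis using le n_def by simp
      qed
    qed
    have Rsym: "poly R x = poly R (- 2 - x)" for x
      unfolding R_def by (simp add: poly_power Csym less.prems[symmetric])
    obtain q' where q': "\<forall>x. poly R x = poly q' (x / 2 + x^2 / 4)"
      using less.hyps[OF degR] Rsym by blast
    show ?thesis
    proof (intro exI allI)
      fix x
      have "poly P x = poly R x + a * 4 ^ t * (poly C x) ^ t" unfolding R_def by (simp add: poly_power)
      also have "\<dots> = poly (q' + smult (a * 4 ^ t) ([:0, 1:] ^ t)) (x / 2 + x^2 / 4)"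
        using q' by (simp add: polyC poly_power)
      finally show "poly P x = poly (q' + smult (a * 4 ^ t) ([:0, 1:] ^ t)) (x / 2 + x^2 / 4)" .
    qed
  qed
qed

definition dl :: "nat \<Rightarrow> nat" where "dl b = (if b = 0 then 2 else if b = 1 then 1 else 0)"
definition dc :: "nat \<Rightarrow> complex" where "dc b = (if b = 1 then 1/4 else 1/2)"

lemma dualgen_dl: "dualgen k b = sm (dc b) (gen k (dl b))"
  unfolding dualgen_def gen_def dl_def dc_def sm_def by (auto simp: fun_eq_iff)

lemma prodlist_sm: "prodlist k (map (\<lambda>x. sm (c x) (M x)) L) = sm (prod_list (map c L)) (prodlist k (map M L))"
  by (induction L) (simp_all add: mmul_sm_left mmul_sm_right sm_sm mult.commute)

lemma ws_letters:
  "prodlist k (map (\<lambda>x. gen k (\<sigma> x)) zs @ map (\<lambda>x. dualgen k (\<sigma> x)) ts)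
   = sm (prod_list (map (\<lambda>x. dc (\<sigma> x)) ts)) (prodlist k (map (gen k) (map \<sigma> zs @ map (\<lambda>x. dl (\<sigma> x)) ts)))"
proof -
  have "prodlist k (map (\<lambda>x. gen k (\<sigma> x)) zs @ map (\<lambda>x. dualgen k (\<sigma> x)) ts)
      = mm k (prodlist k (map (\<lambda>x. gen k (\<sigma> x)) zs)) (prodlist k (map (\<lambda>x. sm (dc (\<sigma> x)) (gen k (dl (\<sigma> x)))) ts))"
    by (subst prodlist_append2) (auto intro!: supp_sm supp_gen simp: dualgen_dl)
  also have "\<dots> = sm (prod_list (map (\<lambda>x. dc (\<sigma> x)) ts))
      (mm k (prodlist k (map (\<lambda>x. gen k (\<sigma> x)) zs)) (prodlist k (map (\<lambda>x. gen k (dl (\<sigma> x))) ts)))"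
    by (simp add: prodlist_sm mmul_sm_right)
  also have "mm k (prodlist k (map (\<lambda>x. gen k (\<sigma> x)) zs)) (prodlist k (map (\<lambda>x. gen k (dl (\<sigma> x))) ts))
      = prodlist k (map (gen k) (map \<sigma> zs @ map (\<lambda>x. dl (\<sigma> x)) ts))"
    by (subst prodlist_append2[symmetric]) (auto simp: supp_gen o_def)
  finally show ?thesis .
qed

definition wordK :: "nat \<Rightarrow> nat \<Rightarrow> (nat \<Rightarrow> nat) \<Rightarrow> nat list" where
  "wordK m n \<sigma> = map \<sigma> [0..<m+n] @ map (\<lambda>x. dl (\<sigma> x)) (rev [0..<m] @ rev [m..<m+n])"
definition coefK :: "nat \<Rightarrow> nat \<Rightarrow> (nat \<Rightarrow> nat) \<Rightarrow> complex" where
  "coefK m n \<sigma> = prod_list (map (\<lambda>x. dc (\<sigma> x)) (rev [0..<m] @ rev [m..<m+n]))"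

definition GW :: "nat \<Rightarrow> nat \<Rightarrow> complex \<Rightarrow> nat \<Rightarrow> nat \<Rightarrow> complex" where
  "GW m n x i j = (\<Sum>\<sigma>\<in>PiE {0..<m+n} T3. coefK m n \<sigma> * gent x (wordK m n \<sigma>) i j)"
definition GWp :: "nat \<Rightarrow> nat \<Rightarrow> nat \<Rightarrow> nat \<Rightarrow> complex poly" where
  "GWp m n i j = (\<Sum>\<sigma>\<in>PiE {0..<m+n} T3. smult (coefK m n \<sigma>) (gpp (wordK m n \<sigma>) i j))"

lemma poly_GWp: "poly (GWp m n i j) x = GW m n x i j"
  unfolding GWp_def GW_def by (simp add: poly_sum poly_gpp)

lemma ws_GW: "ws_rep k (Kmn m n) i j = (if i \<le> k \<and> j \<le> k then GW m n (of_nat k) i j else 0)"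
proof -
  have "ws_rep k (Kmn m n) i j = (\<Sum>\<sigma>\<in>PiE {0..<m+n} T3. coefK m n \<sigma> *
      (if i \<le> k \<and> j \<le> k then gent (of_nat k) (wordK m n \<sigma>) i j else 0))"
    unfolding ws_rep_Kmn sum_mat_apply ws_letters sm_apply Lmat coefK_def wordK_def ..
  also have "\<dots> = (if i \<le> k \<and> j \<le> k then GW m n (of_nat k) i j else 0)"
    unfolding GW_def by auto
  finally show ?thesis .
qed

lemma HC_sym: "GW m n (of_nat k) 0 0 = GW m n (- of_nat k - 2) 0 0"
proof -
  have diag: "GWp m n j j = GWp m n 0 0" for j
  proof (rule poly_eq_inf[OF inf_of_nat_ge[of j]])
    fix x assume "x \<in> (of_nat :: nat \<Rightarrow> complex) ` {j..}"
    then obtain k' where k': "j \<le> k'" "x = of_nat k'" by auto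
    have "ws_rep k' (Kmn m n) j j = ws_rep k' (Kmn m n) 0 0"
      using k'(1) by (subst (1 2) scalar_U) (simp add: sm_def mid_def)
    then show "poly (GWp m n j j) x = poly (GWp m n 0 0) x"
      using k' by (simp add: ws_GW poly_GWp)
  qed
  have "GW m n (of_nat k) 0 0 = GW m n (of_nat k) (Suc k) (Suc k)"
    using diag[of "Suc k"] by (metis poly_GWp)
  also have "\<dots> = GW m n (- of_nat k - 2) 0 0"
    unfolding GW_def by (simp add: gent_reflect)
  finally show ?thesis .
qed

lemma ws_poly: "\<exists>q. \<forall>k. ws_rep k (Kmn m n) = sm (poly q (cc k)) (mid (Suc k))"
proof -
  define P where "P = GWp m n 0 0"
  have "pcompose P [:-2, -1:] = P"
  proof (rule poly_eq_inf[OF inf_of_nat_ge[of 0]])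
    fix x assume "x \<in> (of_nat :: nat \<Rightarrow> complex) ` {0..}"
    then obtain k where k: "x = of_nat k" by auto
    have h: "poly [:-2, -1:] x = - of_nat k - 2" using k by simp
    show "poly (pcompose P [:-2, -1:]) x = poly P x"
      unfolding P_def poly_pcompose h poly_GWp unfolding k by (rule HC_sym[symmetric])
  qed
  then have "poly P x = poly P (- 2 - x)" for x
  proof -
    assume a: "pcompose P [:-2, -1:] = P"
    have h: "poly [:-2, -1:] x = - 2 - x" by simp
    have "poly P x = poly (pcompose P [:-2, -1:]) x" by (simp only: a)
    also have "\<dots> = poly P (- 2 - x)" by (simp only: poly_pcompose h)
    finally show ?thesis .
  qed
  then obtain q where q: "\<forall>x. poly P x = poly q (x / 2 + x^2 / 4)" using sym_poly by blast
  show ?thesis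
  proof (intro exI allI)
    fix k
    have "ws_rep k (Kmn m n) = sm (ws_rep k (Kmn m n) 0 0) (mid (Suc k))" by (rule scalar_U)
    also have "ws_rep k (Kmn m n) 0 0 = poly q (cc k)"
      using q unfolding ws_GW poly_GWp[symmetric] P_def cc_def by simp
    finally show "ws_rep k (Kmn m n) = sm (poly q (cc k)) (mid (Suc k))" .
  qed
qed

lemma Psi_mid: "Psi k (mid (Suc k)) = 0"
  unfolding Psi_def by (simp add: cm_mid supp_intros cm_zero_right)

lemma cas_cc: "cas k = cc k"
proof -
  have K: "[0, 0] = Kmn 1 0" by (simp add: Kmn_def)
  have "ws_rep k (Kmn 1 0) = (\<Sum>\<alpha>\<in>PiE {0..<1} T3. mm k (Aw k \<alpha> [0..<1]) ((Phi k ^^ 0) (Asw k \<alpha> [0..<1])))"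
    by (rule ws_rep_U)
  also have "\<dots> = (\<Sum>\<alpha>\<in>PiE (insert 0 {}) T3. mm k (Aw k \<alpha> [0]) (Asw k \<alpha> [0]))"
  proof -
    have "{0..<1::nat} = insert 0 {}" by auto
    then show ?thesis by simp
  qed
  also have "\<dots> = (\<Sum>b\<in>{0,1,2}. \<Sum>\<alpha>\<in>PiE {} T3. mm k (Aw k (\<alpha>(0 := b)) [0]) (Asw k (\<alpha>(0 := b)) [0]))"
    by (rule sum_PiE_insert) simp
  also have "\<dots> = (\<Sum>b\<in>{0,1,2}. mm k (gen k b) (mm k (mid (Suc k)) (dualgen k b)))"
    by (simp add: Aw_def Asw_def mid_left mid_right supp_gen supp_dualgen)
  also have "\<dots> = Phi k (mid (Suc k))" unfolding Phi_def three ..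
  also have "\<dots> = sm (cc k) (mid (Suc k))" by (simp add: Phi_Psi supp_mid Psi_mid)
  finally have "ws_rep k (Kmn 1 0) = sm (cc k) (mid (Suc k))" .
  then show ?thesis unfolding cas_def K by (simp add: sm_def mid_def)
qed

lemma cc_inj: "cc k = cc k' \<Longrightarrow> k = k'"
proof -
  assume a: "cc k = cc k'"
  have e: "(of_nat (j * (j + 2)) :: complex) = 4 * cc j" for j unfolding cc_def by (simp add: power2_eq_square algebra_simps)
  have "(of_nat (k * (k + 2)) :: complex) = of_nat (k' * (k' + 2))" by (simp only: e a)
  then have "k * (k + 2) = k' * (k' + 2)" by (simp only: of_nat_eq_iff)
  moreover have "strict_mono (\<lambda>i::nat. i * (i + 2))"
  proof (rule strict_monoI)
    fix x y :: nat assume "x < y" then show "x * (x + 2) < y * (y + 2)" by (intro mult_strict_mono) auto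
  qed
  ultimately show "k = k'" by (metis strict_mono_eq)
qed

lemma wsl2_eq: assumes "\<And>k. ws_rep k w = sm (poly p (cc k)) (mid (Suc k))" shows "wsl2 w = p"
  unfolding wsl2_def
proof (rule the_equality)
  show "\<forall>k. ws_rep k w = (\<lambda>i j. if i = j \<and> i \<le> k then poly p (cas k) else 0)"
    using assms by (auto simp: fun_eq_iff sm_def mid_def cas_cc)
next
  fix p' assume a: "\<forall>k. ws_rep k w = (\<lambda>i j. if i = j \<and> i \<le> k then poly p' (cas k) else 0)"
  show "p' = p"
  proof (rule poly_eq_inf)
    have "inj cc" using cc_inj by (intro injI)
    then show "infinite (range cc)" using finite_imageD infinite_UNIV_nat by blast
    fix x assume "x \<in> range cc"
    then obtain k where k: "x = cc k" by auto
    have "ws_rep k w 0 0 = poly p' (cas k)" using a by simp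
    moreover have "ws_rep k w 0 0 = poly p (cc k)" using assms by (simp add: sm_def mid_def)
    ultimately show "poly p' x = poly p x" using k cas_cc by simp
  qed
qed

lemma Psi_via_Phi: "supp k Z \<Longrightarrow> Psi k Z = sm (2 * cc k) Z - sm 2 (Phi k Z)"
  by (simp add: Phi_Psi) (simp add: fun_eq_iff fa sm_def algebra_simps)

lemma Phip_diff: "(Phi k ^^ s) (A - B) = (Phi k ^^ s) A - (Phi k ^^ s) B"
proof -
  have e: "A - B = A + sm (-1) B" by (simp add: fun_eq_iff fa sm_def)
  have "(Phi k ^^ s) (A - B) = (Phi k ^^ s) A + sm (-1) ((Phi k ^^ s) B)" unfolding e by (simp only: Phip_add Phip_sm)
  then show ?thesis by (simp add: fun_eq_iff fa sm_def)
qed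

lemma W_rs: "\<exists>Q. \<forall>k. (\<Sum>\<alpha>\<in>PiE {0..<m} T3. mm k (Aw k \<alpha> [0..<m]) ((Phi k ^^ s) ((Psi k ^^ r) (Asw k \<alpha> [0..<m]))))
    = sm (poly Q (cc k)) (mid (Suc k))"
proof (induction r arbitrary: s)
  case 0
  obtain q where q: "\<forall>k. ws_rep k (Kmn m s) = sm (poly q (cc k)) (mid (Suc k))" using ws_poly by blast
  show ?case by (rule exI[of _ q]) (use q in \<open>simp add: ws_rep_U\<close>)
next
  case (Suc r)
  obtain Q1 where Q1: "\<forall>k. (\<Sum>\<alpha>\<in>PiE {0..<m} T3. mm k (Aw k \<alpha> [0..<m]) ((Phi k ^^ s) ((Psi k ^^ r) (Asw k \<alpha> [0..<m]))))
    = sm (poly Q1 (cc k)) (mid (Suc k))" using Suc.IH by blast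
  obtain Q2 where Q2: "\<forall>k. (\<Sum>\<alpha>\<in>PiE {0..<m} T3. mm k (Aw k \<alpha> [0..<m]) ((Phi k ^^ Suc s) ((Psi k ^^ r) (Asw k \<alpha> [0..<m]))))
    = sm (poly Q2 (cc k)) (mid (Suc k))" using Suc.IH by blast
  show ?case
  proof (intro exI allI)
    fix k
    have "(\<Sum>\<alpha>\<in>PiE {0..<m} T3. mm k (Aw k \<alpha> [0..<m]) ((Phi k ^^ s) ((Psi k ^^ Suc r) (Asw k \<alpha> [0..<m]))))
      = (\<Sum>\<alpha>\<in>PiE {0..<m} T3. sm (2 * cc k) (mm k (Aw k \<alpha> [0..<m]) ((Phi k ^^ s) ((Psi k ^^ r) (Asw k \<alpha> [0..<m]))))
          - sm 2 (mm k (Aw k \<alpha> [0..<m]) ((Phi k ^^ Suc s) ((Psi k ^^ r) (Asw k \<alpha> [0..<m])))))"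
    proof (intro sum.cong refl)
      fix \<alpha>
      have sZ: "supp k ((Psi k ^^ r) (Asw k \<alpha> [0..<m]))" by (intro Psip_supp supp_Asw)
      show "mm k (Aw k \<alpha> [0..<m]) ((Phi k ^^ s) ((Psi k ^^ Suc r) (Asw k \<alpha> [0..<m])))
        = sm (2 * cc k) (mm k (Aw k \<alpha> [0..<m]) ((Phi k ^^ s) ((Psi k ^^ r) (Asw k \<alpha> [0..<m]))))
          - sm 2 (mm k (Aw k \<alpha> [0..<m]) ((Phi k ^^ Suc s) ((Psi k ^^ r) (Asw k \<alpha> [0..<m]))))"
      proof -
        have e: "(Psi k ^^ Suc r) (Asw k \<alpha> [0..<m]) = Psi k ((Psi k ^^ r) (Asw k \<alpha> [0..<m]))" by simp
        show ?thesis by (simp only: e Psi_via_Phi[OF sZ] Phip_diff Phip_sm mmul_lin) (simp only: funpow_Suc_right o_apply)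
      qed
    qed
    also have "\<dots> = sm (2 * cc k) (sm (poly Q1 (cc k)) (mid (Suc k))) - sm 2 (sm (poly Q2 (cc k)) (mid (Suc k)))"
      by (simp only: sum_subtractf sm_sum[symmetric] Q1 Q2)
    also have "\<dots> = sm (poly (smult 2 ([:0, 1:] * Q1) - smult 2 Q2) (cc k)) (mid (Suc k))"
      by (simp add: fun_eq_iff fa sm_def algebra_simps)
    finally show "(\<Sum>\<alpha>\<in>PiE {0..<m} T3. mm k (Aw k \<alpha> [0..<m]) ((Phi k ^^ s) ((Psi k ^^ Suc r) (Asw k \<alpha> [0..<m]))))
      = sm (poly (smult 2 ([:0, 1:] * Q1) - smult 2 Q2) (cc k)) (mid (Suc k))" .
  qed
qed

lemma M_poly: "\<exists>a. \<forall>k. (\<Sum>\<alpha>\<in>PiE {0..<m} T3. mm k (Aw k \<alpha> [0..<m]) (opoly k p (Asw k \<alpha> [0..<m])))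
    = sm (poly a (cc k)) (mid (Suc k))"
proof -
  have "\<forall>r. \<exists>Q. \<forall>k. (\<Sum>\<alpha>\<in>PiE {0..<m} T3. mm k (Aw k \<alpha> [0..<m]) ((Psi k ^^ r) (Asw k \<alpha> [0..<m])))
    = sm (poly Q (cc k)) (mid (Suc k))"
  proof
    fix r show "\<exists>Q. \<forall>k. (\<Sum>\<alpha>\<in>PiE {0..<m} T3. mm k (Aw k \<alpha> [0..<m]) ((Psi k ^^ r) (Asw k \<alpha> [0..<m])))
      = sm (poly Q (cc k)) (mid (Suc k))" using W_rs[of m 0 r] by simp
  qed
  from choice[OF this] obtain Qf where Qf0: "\<forall>r k. (\<Sum>\<alpha>\<in>PiE {0..<m} T3. mm k (Aw k \<alpha> [0..<m]) ((Psi k ^^ r) (Asw k \<alpha> [0..<m])))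
    = sm (poly (Qf r) (cc k)) (mid (Suc k))" by blast
  then have Qf: "(\<Sum>\<alpha>\<in>PiE {0..<m} T3. mm k (Aw k \<alpha> [0..<m]) ((Psi k ^^ r) (Asw k \<alpha> [0..<m])))
    = sm (poly (Qf r) (cc k)) (mid (Suc k))" for r k by blast
  show ?thesis
  proof (intro exI allI)
    fix k
    have "(\<Sum>\<alpha>\<in>PiE {0..<m} T3. mm k (Aw k \<alpha> [0..<m]) (opoly k p (Asw k \<alpha> [0..<m])))
      = (\<Sum>\<alpha>\<in>PiE {0..<m} T3. \<Sum>r<Suc (degree p). sm (coeff p r) (mm k (Aw k \<alpha> [0..<m]) ((Psi k ^^ r) (Asw k \<alpha> [0..<m]))))"
      unfolding opoly_def by (simp only: mmul_sum_right mmul_sm_right)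
    also have "\<dots> = (\<Sum>r<Suc (degree p). \<Sum>\<alpha>\<in>PiE {0..<m} T3. sm (coeff p r) (mm k (Aw k \<alpha> [0..<m]) ((Psi k ^^ r) (Asw k \<alpha> [0..<m]))))"
      by (rule sum.swap)
    also have "\<dots> = (\<Sum>r<Suc (degree p). sm (coeff p r) (\<Sum>\<alpha>\<in>PiE {0..<m} T3. mm k (Aw k \<alpha> [0..<m]) ((Psi k ^^ r) (Asw k \<alpha> [0..<m]))))"
      by (simp only: sm_sum)
    also have "\<dots> = (\<Sum>r<Suc (degree p). sm (coeff p r) (sm (poly (Qf r) (cc k)) (mid (Suc k))))"
      by (simp only: Qf)
    also have "\<dots> = sm (poly (\<Sum>r<Suc (degree p). smult (coeff p r) (Qf r)) (cc k)) (mid (Suc k))"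
      by (simp add: sm_sm poly_sum sm_sum_scalar)
    finally show "(\<Sum>\<alpha>\<in>PiE {0..<m} T3. mm k (Aw k \<alpha> [0..<m]) (opoly k p (Asw k \<alpha> [0..<m])))
      = sm (poly (\<Sum>r<Suc (degree p). smult (coeff p r) (Qf r)) (cc k)) (mid (Suc k))" .
  qed
qed

theorem mainTheorem5:
  fixes m :: nat
  shows "\<exists>a :: nat \<Rightarrow> complex poly. \<forall>n :: nat.
           wsl2 (Kmn m n) = (\<Sum>i\<le>m. a i * [: - (of_nat (i * (i + 1)) / 2), 1 :] ^ n)"
proof -
  have "\<forall>i. \<exists>a. \<forall>k. (\<Sum>\<alpha>\<in>PiE {0..<m} T3. mm k (Aw k \<alpha> [0..<m]) (opoly k (lag m i) (Asw k \<alpha> [0..<m])))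
    = sm (poly a (cc k)) (mid (Suc k))" using M_poly by blast
  from choice[OF this] obtain af where af0: "\<forall>i k. (\<Sum>\<alpha>\<in>PiE {0..<m} T3. mm k (Aw k \<alpha> [0..<m]) (opoly k (lag m i) (Asw k \<alpha> [0..<m])))
    = sm (poly (af i) (cc k)) (mid (Suc k))" by blast
  then have af: "(\<Sum>\<alpha>\<in>PiE {0..<m} T3. mm k (Aw k \<alpha> [0..<m]) (opoly k (lag m i) (Asw k \<alpha> [0..<m])))
    = sm (poly (af i) (cc k)) (mid (Suc k))" for i k by blast
  show ?thesis
  proof (intro exI allI)
    fix n
    show "wsl2 (Kmn m n) = (\<Sum>i\<le>m. af i * [: - (of_nat (i * (i + 1)) / 2), 1 :] ^ n)"
    proof (rule wsl2_eq)
      fix k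
      have "ws_rep k (Kmn m n) = (\<Sum>\<alpha>\<in>PiE {0..<m} T3. mm k (Aw k \<alpha> [0..<m])
          (\<Sum>i\<in>{0..m}. sm ((cc k - mu i / 2) ^ n) (opoly k (lag m i) (Asw k \<alpha> [0..<m]))))"
        unfolding ws_rep_U
      proof (intro sum.cong refl)
        fix \<alpha>
        have "Asw k \<alpha> [0..<m] \<in> Sm k m"
          using Sm_prod_dual[of k \<alpha> "rev [0..<m]"] unfolding Asw_def by simp
        then show "mm k (Aw k \<alpha> [0..<m]) ((Phi k ^^ n) (Asw k \<alpha> [0..<m]))
          = mm k (Aw k \<alpha> [0..<m]) (\<Sum>i\<in>{0..m}. sm ((cc k - mu i / 2) ^ n) (opoly k (lag m i) (Asw k \<alpha> [0..<m])))"
          by (simp only: Phip_decomp)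
      qed
      also have "\<dots> = (\<Sum>\<alpha>\<in>PiE {0..<m} T3. \<Sum>i\<in>{0..m}. sm ((cc k - mu i / 2) ^ n)
          (mm k (Aw k \<alpha> [0..<m]) (opoly k (lag m i) (Asw k \<alpha> [0..<m]))))"
        by (simp only: mmul_sum_right mmul_sm_right)
      also have "\<dots> = (\<Sum>i\<in>{0..m}. \<Sum>\<alpha>\<in>PiE {0..<m} T3. sm ((cc k - mu i / 2) ^ n)
          (mm k (Aw k \<alpha> [0..<m]) (opoly k (lag m i) (Asw k \<alpha> [0..<m]))))"
        by (rule sum.swap)
      also have "\<dots> = (\<Sum>i\<in>{0..m}. sm ((cc k - mu i / 2) ^ n)
          (\<Sum>\<alpha>\<in>PiE {0..<m} T3. mm k (Aw k \<alpha> [0..<m]) (opoly k (lag m i) (Asw k \<alpha> [0..<m]))))"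
        by (simp only: sm_sum)
      also have "\<dots> = (\<Sum>i\<in>{0..m}. sm ((cc k - mu i / 2) ^ n) (sm (poly (af i) (cc k)) (mid (Suc k))))"
        by (simp only: af)
      also have "\<dots> = sm (poly (\<Sum>i\<le>m. af i * [: - (of_nat (i * (i + 1)) / 2), 1 :] ^ n) (cc k)) (mid (Suc k))"
        by (simp add: sm_sm poly_sum sm_sum_scalar atLeast0AtMost mu_def mult.commute)
      finally show "ws_rep k (Kmn m n) = sm (poly (\<Sum>i\<le>m. af i * [: - (of_nat (i * (i + 1)) / 2), 1 :] ^ n) (cc k)) (mid (Suc k))" .
    qed
  qed
qed

end
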